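(* Let $p>2$ and fix $H\ge1$, $P,L\ge0$. There exist $M>0$ and $\bar\ell>0$ such that, for every $\ell\in(0,\bar\ell)$ and every positive bound-state $u$ on the regular single-knot graph $\mathcal G$ of length $\ell$ with $H$ half-lines, $P$ pendants and $L$ loops, $\|u\|_{L^\infty(\mathcal K)}\le M$, where $\mathcal K$ is the compact core of $\mathcal G$.
   Context: A single-knot metric graph consists of $H\ge1$ half-lines, $P\ge0$ pendants and $L\ge0$ loops attached at a common vertex $\mathbf 0$; regular of length $\ell$: pendants of length $\ell$, loops of length $2\ell$. The compact core is the union of all bounded edges. A bound-state is a nontrivial $u\in H^1(\mathcal G)$ with $\int_{\mathcal G}u'\eta'+u\eta-|u|^{p-2}u\eta=0$ for all $\eta\in H^1(\mathcal G)$. *)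

theory Defs
  imports "HOL-Analysis.Analysis"
begin

definition H1_on :: "real set \<Rightarrow> (real \<Rightarrow> real) \<Rightarrow> (real \<Rightarrow> real) \<Rightarrow> bool" where
  "H1_on I u du \<longleftrightarrow>
     set_borel_measurable lborel I u \<and> set_borel_measurable lborel I du \<and>
     set_integrable lborel I (\<lambda>x. (u x)\<^sup>2) \<and> set_integrable lborel I (\<lambda>x. (du x)\<^sup>2) \<and>
     (\<forall>x\<in>I. \<forall>y\<in>I. x \<le> y \<longrightarrow>
        set_integrable lborel {x..y} du \<and> u y - u x = (LINT t:{x..y}|lborel. du t))"

text \<open>A function on the single-knot graph: (half-line components, pendant components, loop
  components). Half-line i is [0,\<infinity>), pendant j is [0,l], loop k is [0,2l]; coordinate 0 of
  every edge (and 2l of every loop) is the vertex.\<close>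
type_synonym gfun = "(nat \<Rightarrow> real \<Rightarrow> real) \<times> (nat \<Rightarrow> real \<Rightarrow> real) \<times> (nat \<Rightarrow> real \<Rightarrow> real)"

definition hl :: "gfun \<Rightarrow> nat \<Rightarrow> real \<Rightarrow> real" where "hl u = fst u"
definition pd :: "gfun \<Rightarrow> nat \<Rightarrow> real \<Rightarrow> real" where "pd u = fst (snd u)"
definition lp :: "gfun \<Rightarrow> nat \<Rightarrow> real \<Rightarrow> real" where "lp u = snd (snd u)"

definition H1_graph :: "nat \<Rightarrow> nat \<Rightarrow> nat \<Rightarrow> real \<Rightarrow> gfun \<Rightarrow> gfun \<Rightarrow> bool" where
  "H1_graph H P L l u du \<longleftrightarrow>
     (\<forall>i<H. H1_on {0..} (hl u i) (hl du i)) \<and>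
     (\<forall>j<P. H1_on {0..l} (pd u j) (pd du j)) \<and>
     (\<forall>k<L. H1_on {0..2*l} (lp u k) (lp du k)) \<and>
     (\<exists>c. (\<forall>i<H. hl u i 0 = c) \<and> (\<forall>j<P. pd u j 0 = c) \<and>
          (\<forall>k<L. lp u k 0 = c \<and> lp u k (2*l) = c))"

definition graph_int :: "nat \<Rightarrow> nat \<Rightarrow> nat \<Rightarrow> real \<Rightarrow> (real \<Rightarrow> real \<Rightarrow> real \<Rightarrow> real \<Rightarrow> real)
    \<Rightarrow> gfun \<Rightarrow> gfun \<Rightarrow> gfun \<Rightarrow> gfun \<Rightarrow> real" where
  "graph_int H P L l F u du eta deta =
     (\<Sum>i<H. LINT x:{0..}|lborel. F (hl u i x) (hl du i x) (hl eta i x) (hl deta i x)) +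
     (\<Sum>j<P. LINT x:{0..l}|lborel. F (pd u j x) (pd du j x) (pd eta j x) (pd deta j x)) +
     (\<Sum>k<L. LINT x:{0..2*l}|lborel. F (lp u k x) (lp du k x) (lp eta k x) (lp deta k x))"

definition nontrivial_g :: "nat \<Rightarrow> nat \<Rightarrow> nat \<Rightarrow> real \<Rightarrow> gfun \<Rightarrow> bool" where
  "nontrivial_g H P L l u \<longleftrightarrow>
     (\<exists>i<H. \<exists>x\<ge>0. hl u i x \<noteq> 0) \<or> (\<exists>j<P. \<exists>x\<in>{0..l}. pd u j x \<noteq> 0) \<or>
     (\<exists>k<L. \<exists>x\<in>{0..2*l}. lp u k x \<noteq> 0)"

definition bound_state :: "real \<Rightarrow> nat \<Rightarrow> nat \<Rightarrow> nat \<Rightarrow> real \<Rightarrow> gfun \<Rightarrow> bool" where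
  "bound_state p H P L l u \<longleftrightarrow>
     (\<exists>du. H1_graph H P L l u du) \<and> nontrivial_g H P L l u \<and>
     (\<forall>du eta deta. H1_graph H P L l u du \<longrightarrow> H1_graph H P L l eta deta \<longrightarrow>
        graph_int H P L l (\<lambda>a da e de. da * de + a * e - \<bar>a\<bar> powr (p - 2) * a * e) u du eta deta = 0)"

definition positive_g :: "nat \<Rightarrow> nat \<Rightarrow> nat \<Rightarrow> real \<Rightarrow> gfun \<Rightarrow> bool" where
  "positive_g H P L l u \<longleftrightarrow>
     (\<forall>i<H. \<forall>x\<ge>0. hl u i x > 0) \<and> (\<forall>j<P. \<forall>x\<in>{0..l}. pd u j x > 0) \<and>
     (\<forall>k<L. \<forall>x\<in>{0..2*l}. lp u k x > 0)"

text \<open>Sup norm on the compact core (pendants and loops); u is continuous on each edge.\<close>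
definition core_bounded_by :: "nat \<Rightarrow> nat \<Rightarrow> real \<Rightarrow> gfun \<Rightarrow> real \<Rightarrow> bool" where
  "core_bounded_by P L l u M \<longleftrightarrow>
     (\<forall>j<P. \<forall>x\<in>{0..l}. \<bar>pd u j x\<bar> \<le> M) \<and> (\<forall>k<L. \<forall>x\<in>{0..2*l}. \<bar>lp u k x\<bar> \<le> M)"

end

theory Submission
  imports Defs
begin


definition ramp :: "real \<Rightarrow> real \<Rightarrow> real" where "ramp s t = max 0 (t - s)"
definition tf :: "real \<Rightarrow> (real \<times> real) list \<Rightarrow> real \<Rightarrow> real" where
  "tf g0 rs t = g0 + (\<Sum>(c,s)\<leftarrow>rs. c * ramp s t)"
definition dtf :: "(real \<times> real) list \<Rightarrow> real \<Rightarrow> real" where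
  "dtf rs t = (\<Sum>(c,s)\<leftarrow>rs. if s < t then c else 0)"

lemma ramp_cont: "continuous_on A (ramp s)"
  unfolding ramp_def by (intro continuous_intros)

lemma ramp_has_integral:
  assumes "x \<le> y"
  shows "((\<lambda>t. if s < t then 1 else 0::real) has_integral (ramp s y - ramp s x)) {x..y}"
proof (rule fundamental_theorem_of_calculus_interior_strong[where S="{s}"])
  show "continuous_on {x..y} (ramp s)" by (rule ramp_cont)
  fix t assume t: "t \<in> {x<..<y} - {s}"
  show "(ramp s has_vector_derivative (if s < t then 1 else 0)) (at t)"
  proof (cases "s < t")
    case True
    have "((\<lambda>t. t - s) has_real_derivative 1) (at t)" by (auto intro!: derivative_eq_intros)
    then have "(ramp s has_real_derivative 1) (at t)"
      by (rule has_field_derivative_transform_within_open[where S="{s<..}"]) (use True in \<open>auto simp: ramp_def\<close>)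
    then show ?thesis using True by (simp add: has_real_derivative_iff_has_vector_derivative)
  next
    case False
    then have ts: "t < s" using t by auto
    have "((\<lambda>t. 0) has_real_derivative 0) (at t)" by (auto intro!: derivative_eq_intros)
    then have "(ramp s has_real_derivative 0) (at t)"
      by (rule has_field_derivative_transform_within_open[where S="{..<s}"]) (use ts in \<open>auto simp: ramp_def\<close>)
    then show ?thesis using False by (simp add: has_real_derivative_iff_has_vector_derivative)
  qed
qed (use assms in auto)

lemma dtf_meas: "dtf rs \<in> borel_measurable borel"
  unfolding dtf_def
  by (induction rs) (auto intro!: borel_measurable_add)

lemma dtf_bound: "\<bar>dtf rs t\<bar> \<le> (\<Sum>(c,s)\<leftarrow>rs. \<bar>c\<bar>)"
  unfolding dtf_def
  by (induction rs) (auto intro!: order.trans[OF abs_triangle_ineq])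

lemma tf_cont: "continuous_on A (tf g0 rs)"
  unfolding tf_def
proof (induction rs)
  case Nil then show ?case by (auto intro!: continuous_intros)
next
  case (Cons a rs)
  obtain c s where a: "a = (c,s)" by force
  have "continuous_on A (\<lambda>t. c * ramp s t)" using ramp_cont[of A s] by (intro continuous_intros) auto
  from continuous_on_add[OF this Cons.IH] show ?case
    unfolding a by (simp add: add_ac)
qed

lemma dtf_has_integral:
  assumes "x \<le> y"
  shows "(dtf rs has_integral (tf g0 rs y - tf g0 rs x)) {x..y}"
proof (induction rs)
  case Nil then show ?case by (simp add: dtf_def tf_def)
next
  case (Cons a rs)
  obtain c s where a: "a = (c,s)" by force
  have "((\<lambda>t. c * (if s < t then 1 else 0)) has_integral c * (ramp s y - ramp s x)) {x..y}"
    by (intro has_integral_mult_right ramp_has_integral assms)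
  from has_integral_add[OF this Cons.IH] 
  have "((\<lambda>t. c * (if s < t then 1 else 0) + dtf rs t) has_integral (tf g0 ((c,s)#rs) y - tf g0 ((c,s)#rs) x)) {x..y}"
    unfolding tf_def by (simp add: algebra_simps)
  moreover have "(\<lambda>t. c * (if s < t then 1 else 0) + dtf rs t) = dtf ((c,s)#rs)"
    by (auto simp: dtf_def)
  ultimately show ?case unfolding a by simp
qed

lemma hk_to_lint:
  fixes g :: "real \<Rightarrow> real"
  assumes "set_integrable lborel {x..y} g" "(g has_integral I) {x..y}"
  shows "(LINT t:{x..y}|lborel. g t) = I"
  using set_borel_integral_eq_integral(2)[OF assms(1)] assms(2) integral_unique by metis

lemma dtf_set_integrable: "set_integrable lborel {x..y} (dtf rs)"
proof (rule set_integrable_bound[where f="\<lambda>_. (\<Sum>(c,s)\<leftarrow>rs. \<bar>c\<bar>)"])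
  show "set_integrable lborel {x..y} (\<lambda>_. \<Sum>(c, s)\<leftarrow>rs. \<bar>c\<bar>)"
    by (intro borel_integrable_atLeastAtMost' continuous_intros)
  show "set_borel_measurable lborel {x..y} (dtf rs)"
    unfolding set_borel_measurable_def using dtf_meas by measurable
  show "AE t in lborel. t \<in> {x..y} \<longrightarrow> norm (dtf rs t) \<le> norm (\<Sum>(c, s)\<leftarrow>rs. \<bar>c\<bar>)"
    using dtf_bound by (auto intro!: AE_I2 order.trans[OF dtf_bound])
qed

lemma dtf_prim:
  assumes "x \<le> y"
  shows "tf g0 rs y - tf g0 rs x = (LINT t:{x..y}|lborel. dtf rs t)"
  using hk_to_lint[OF dtf_set_integrable dtf_has_integral[OF assms]] by simp



lemma set_integrable_restrict_zero:
  fixes g :: "real \<Rightarrow> real"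
  assumes "B \<subseteq> A" "\<And>t. t \<in> A \<Longrightarrow> t \<notin> B \<Longrightarrow> g t = 0"
  shows "set_integrable M A g \<longleftrightarrow> set_integrable M B g"
    and "(LINT t:A|M. g t) = (LINT t:B|M. g t)"
proof -
  have "(\<lambda>t. indicator A t *\<^sub>R g t) = (\<lambda>t. indicator B t *\<^sub>R g t)"
  proof (intro ext)
    fix t show "indicator A t *\<^sub>R g t = indicator B t *\<^sub>R g t"
      using assms by (cases "t \<in> B"; cases "t \<in> A") (auto simp: indicator_def)
  qed
  then show "set_integrable M A g \<longleftrightarrow> set_integrable M B g" "(LINT t:A|M. g t) = (LINT t:B|M. g t)"
    unfolding set_integrable_def set_lebesgue_integral_def by simp_all
qed

lemma dtf_tail:
  assumes "\<forall>(c,s)\<in>set rs. s \<le> Y" "Y < t"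
  shows "dtf rs t = (\<Sum>(c,s)\<leftarrow>rs. c)"
  using assms
proof (induction rs)
  case Nil then show ?case by (simp add: dtf_def)
next
  case (Cons a rs)
  obtain c s where a: "a = (c,s)" by force
  have "s < t" using Cons.prems a by auto
  then show ?case using Cons unfolding a by (simp add: dtf_def)
qed

lemma tf_tail:
  assumes "\<forall>(c,s)\<in>set rs. s \<le> Y" "Y \<le> t"
  shows "tf g0 rs t = tf g0 rs Y + (t - Y) * (\<Sum>(c,s)\<leftarrow>rs. c)"
  using assms
proof (induction rs arbitrary: g0)
  case Nil then show ?case by (simp add: tf_def)
next
  case (Cons a rs)
  obtain c s where a: "a = (c,s)" by force
  have "s \<le> Y" "s \<le> t" using Cons.prems a by auto
  then have "c * ramp s t = c * ramp s Y + c * (t - Y)" by (simp add: ramp_def algebra_simps)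
  moreover have "tf g0 ((c,s)#rs) t = c * ramp s t + tf g0 rs t"
     "tf g0 ((c,s)#rs) Y = c * ramp s Y + tf g0 rs Y" by (simp_all add: tf_def)
  ultimately show ?case using Cons.IH[of g0] Cons.prems unfolding a by (simp add: algebra_simps)
qed

lemma dtf_tail0:
  assumes "\<forall>(c,s)\<in>set rs. s \<le> Y" "Y < t" "(\<Sum>(c,s)\<leftarrow>rs. c) = 0" "tf g0 rs Y = 0"
  shows "dtf rs t = 0" "tf g0 rs t = 0"
  using dtf_tail[of rs Y t] tf_tail[of rs Y t g0] assms by auto

lemma dtf_sq_bound: "(dtf rs x)\<^sup>2 \<le> (\<Sum>(c, s)\<leftarrow>rs. \<bar>c\<bar>)^2"
proof -
  have "\<bar>dtf rs x\<bar>^2 \<le> (\<Sum>(c, s)\<leftarrow>rs. \<bar>c\<bar>)^2"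
    by (rule power_mono[OF dtf_bound]) auto
  then show ?thesis by simp
qed

lemma tf_meas: "tf g0 rs \<in> borel_measurable borel"
  by (intro borel_measurable_continuous_onI tf_cont)

lemma test_H1_compact: "H1_on {0..T} (tf g0 rs) (dtf rs)"
  unfolding H1_on_def
proof (intro conjI ballI impI)
  show "set_borel_measurable lborel {0..T} (tf g0 rs)"
    unfolding set_borel_measurable_def using tf_meas by measurable
  show "set_borel_measurable lborel {0..T} (dtf rs)"
    unfolding set_borel_measurable_def using dtf_meas by measurable
  show "set_integrable lborel {0..T} (\<lambda>x. (tf g0 rs x)\<^sup>2)"
    by (intro borel_integrable_atLeastAtMost' continuous_intros tf_cont)
  show "set_integrable lborel {0..T} (\<lambda>x. (dtf rs x)\<^sup>2)"
  proof (rule set_integrable_bound[where f="\<lambda>_. (\<Sum>(c,s)\<leftarrow>rs. \<bar>c\<bar>)^2"])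
    show "set_integrable lborel {0..T} (\<lambda>_. (\<Sum>(c, s)\<leftarrow>rs. \<bar>c\<bar>)^2)"
      by (intro borel_integrable_atLeastAtMost' continuous_intros)
    show "set_borel_measurable lborel {0..T} (\<lambda>x. (dtf rs x)\<^sup>2)"
      unfolding set_borel_measurable_def using dtf_meas by measurable
    have "(dtf rs x)\<^sup>2 \<le> (\<Sum>(c, s)\<leftarrow>rs. \<bar>c\<bar>)^2" for x
      by (rule dtf_sq_bound)
    then show "AE t in lborel. t \<in> {0..T} \<longrightarrow> norm ((dtf rs t)\<^sup>2) \<le> norm ((\<Sum>(c, s)\<leftarrow>rs. \<bar>c\<bar>)^2)"
      by (auto intro!: AE_I2)
  qed
  fix x y assume "x \<in> {0..T}" "y \<in> {0..T}" "x \<le> y"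
  then show "set_integrable lborel {x..y} (dtf rs)" "tf g0 rs y - tf g0 rs x = (LINT t:{x..y}|lborel. dtf rs t)"
    using dtf_set_integrable dtf_prim by auto
qed

lemma test_H1_half:
  assumes "\<forall>(c,s)\<in>set rs. s \<le> Y" "(\<Sum>(c,s)\<leftarrow>rs. c) = 0" "tf g0 rs Y = 0" "0 \<le> Y"
  shows "H1_on {0..} (tf g0 rs) (dtf rs)"
proof -
  have z: "dtf rs t = 0" "tf g0 rs t = 0" if "t \<in> {0..}" "t \<notin> {0..Y}" for t
    using dtf_tail0[OF assms(1) _ assms(2,3)] that by auto
  have sub: "{0..Y} \<subseteq> {0::real..}" by auto
  have H: "H1_on {0..Y} (tf g0 rs) (dtf rs)" by (rule test_H1_compact)
  show ?thesis
    unfolding H1_on_def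
  proof (intro conjI ballI impI)
    show "set_borel_measurable lborel {0..} (tf g0 rs)"
      unfolding set_borel_measurable_def using tf_meas by measurable
    show "set_borel_measurable lborel {0..} (dtf rs)"
      unfolding set_borel_measurable_def using dtf_meas by measurable
    have "set_integrable lborel {0..} (\<lambda>x. (tf g0 rs x)\<^sup>2) \<longleftrightarrow> set_integrable lborel {0..Y} (\<lambda>x. (tf g0 rs x)\<^sup>2)"
      by (rule set_integrable_restrict_zero(1)[OF sub]) (use z in auto)
    then show "set_integrable lborel {0..} (\<lambda>x. (tf g0 rs x)\<^sup>2)"
      using H unfolding H1_on_def by auto
    have "set_integrable lborel {0..} (\<lambda>x. (dtf rs x)\<^sup>2) \<longleftrightarrow> set_integrable lborel {0..Y} (\<lambda>x. (dtf rs x)\<^sup>2)"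
      by (rule set_integrable_restrict_zero(1)[OF sub]) (use z in auto)
    then show "set_integrable lborel {0..} (\<lambda>x. (dtf rs x)\<^sup>2)"
      using H unfolding H1_on_def by auto
    fix x y assume "x \<in> {0::real..}" "y \<in> {0::real..}" "x \<le> y"
    then show "set_integrable lborel {x..y} (dtf rs)" "tf g0 rs y - tf g0 rs x = (LINT t:{x..y}|lborel. dtf rs t)"
      using dtf_set_integrable dtf_prim by auto
  qed
qed

lemma zero_H1: "H1_on I (\<lambda>_. 0) (\<lambda>_. 0)"
  unfolding H1_on_def set_integrable_def set_borel_measurable_def by simp



lemma ws_single:
  fixes w :: "real \<Rightarrow> real"
  assumes "0 \<le> s" "s \<le> Y" "set_integrable lborel {s..Y} w"
  shows "set_integrable lborel {0..Y} (\<lambda>t. w t * (if s < t then 1 else 0))"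
    and "(LINT t:{0..Y}|lborel. w t * (if s < t then 1 else 0)) = (LINT t:{s..Y}|lborel. w t)"
proof -
  have eq: "(\<lambda>t. indicator {0..Y} t *\<^sub>R (w t * (if s < t then 1 else 0))) = (\<lambda>t. indicator {s<..Y} t *\<^sub>R w t)"
    using assms(1) by (auto simp: indicator_def fun_eq_iff)
  have i2: "set_integrable lborel {s<..Y} w"
    by (rule set_integrable_subset[OF assms(3)]) auto
  then show "set_integrable lborel {0..Y} (\<lambda>t. w t * (if s < t then 1 else 0))"
    unfolding set_integrable_def eq .
  have "(LINT t:{0..Y}|lborel. w t * (if s < t then 1 else 0)) = (LINT t:{s<..Y}|lborel. w t)"
    unfolding set_lebesgue_integral_def eq ..
  also have "\<dots> = (LINT t:{s..Y}|lborel. w t)"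
  proof (rule set_integral_cong_set)
    show "set_borel_measurable lborel {s..Y} w"
      using assms(3) unfolding set_integrable_def set_borel_measurable_def by (rule borel_measurable_integrable)
    show "set_borel_measurable lborel {s<..Y} w"
      using i2 unfolding set_integrable_def set_borel_measurable_def by (rule borel_measurable_integrable)
    show "AE x in lborel. (x \<in> {s..Y}) = (x \<in> {s<..Y})"
      using AE_lborel_singleton[of s] by eventually_elim auto
  qed
  finally show "(LINT t:{0..Y}|lborel. w t * (if s < t then 1 else 0)) = (LINT t:{s..Y}|lborel. w t)" .
qed

lemma ws_list:
  fixes w u :: "real \<Rightarrow> real"
  assumes "0 \<le> Y" "\<forall>(c,s)\<in>set rs. 0 \<le> s \<and> s \<le> Y"
    and prim: "\<And>a b. 0 \<le> a \<Longrightarrow> a \<le> b \<Longrightarrow> b \<le> Y \<Longrightarrow>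
       set_integrable lborel {a..b} w \<and> u b - u a = (LINT t:{a..b}|lborel. w t)"
  shows "set_integrable lborel {0..Y} (\<lambda>t. w t * dtf rs t) \<and>
         (LINT t:{0..Y}|lborel. w t * dtf rs t) = (\<Sum>(c,s)\<leftarrow>rs. c * (u Y - u s))"
  using assms(2)
proof (induction rs)
  case Nil then show ?case by (simp add: dtf_def set_integrable_def)
next
  case (Cons a rs)
  obtain c s where a: "a = (c,s)" by force
  have s: "0 \<le> s" "s \<le> Y" using Cons.prems a by auto
  have IH: "set_integrable lborel {0..Y} (\<lambda>t. w t * dtf rs t)"
     "(LINT t:{0..Y}|lborel. w t * dtf rs t) = (\<Sum>(c,s)\<leftarrow>rs. c * (u Y - u s))"
    using Cons by auto
  have p: "set_integrable lborel {s..Y} w" "u Y - u s = (LINT t:{s..Y}|lborel. w t)"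
    using prim[OF s(1) s(2) order_refl] by auto
  note S = ws_single[OF s p(1)]
  have I1: "set_integrable lborel {0..Y} (\<lambda>t. c * (w t * (if s < t then 1 else 0)))"
    using S(1) by auto
  have eqf: "(\<lambda>t. w t * dtf ((c,s)#rs) t) = (\<lambda>t. c * (w t * (if s < t then 1 else 0)) + w t * dtf rs t)"
    by (auto simp: dtf_def fun_eq_iff algebra_simps)
  show ?case unfolding a eqf
    using set_integral_add[OF I1 IH(1)] IH(2) S(2) p(2) by simp
qed

lemma fs_single:
  fixes f V V' :: "real \<Rightarrow> real"
  assumes "0 \<le> s" "s \<le> Y"
    and fc: "continuous_on {0..Y} f"
    and dV: "\<And>t. t \<in> {0..Y} \<Longrightarrow> (V has_real_derivative V' t) (at t within {0..Y})"
    and dV': "\<And>t. t \<in> {0..Y} \<Longrightarrow> (V' has_real_derivative (- f t)) (at t within {0..Y})"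
  shows "((\<lambda>t. f t * ramp s t) has_integral (V Y - V s - V' Y * (Y - s))) {0..Y}"
proof -
  have A: "((\<lambda>t. f t * ramp s t) has_integral 0) {0..s}"
    by (rule has_integral_is_0) (auto simp: ramp_def)
  have sub: "{s..Y} \<subseteq> {0..Y}" using assms by auto
  have "((\<lambda>t. f t * (t - s)) has_integral ((V Y - V' Y * (Y - s)) - (V s - V' s * (s - s)))) {s..Y}"
  proof (rule fundamental_theorem_of_calculus)
    show "s \<le> Y" by fact
    fix t assume t: "t \<in> {s..Y}"
    then have t0: "t \<in> {0..Y}" using sub by auto
    have d2: "((\<lambda>z. z - s) has_real_derivative 1) (at t within {s..Y})"
      by (auto intro!: derivative_eq_intros)
    have "((\<lambda>t. V t - V' t * (t - s)) has_real_derivative (V' t - ((- f t) * (t - s) + 1 * V' t))) (at t within {s..Y})"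
      by (intro DERIV_diff DERIV_mult DERIV_subset[OF dV[OF t0] sub] DERIV_subset[OF dV'[OF t0] sub] d2)
    then show "((\<lambda>t. V t - V' t * (t - s)) has_vector_derivative f t * (t - s)) (at t within {s..Y})"
      by (simp add: has_real_derivative_iff_has_vector_derivative algebra_simps)
  qed
  then have B: "((\<lambda>t. f t * ramp s t) has_integral (V Y - V s - V' Y * (Y - s))) {s..Y}"
    by (subst has_integral_cong[where g="\<lambda>t. f t * (t - s)"]) (auto simp: ramp_def algebra_simps)
  from has_integral_combine[OF assms(1,2) A B] show ?thesis by simp
qed

lemma fs_list:
  fixes f V V' :: "real \<Rightarrow> real"
  assumes "0 \<le> Y" "\<forall>(c,s)\<in>set rs. 0 \<le> s \<and> s \<le> Y"
    and fc: "continuous_on {0..Y} f"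
    and dV: "\<And>t. t \<in> {0..Y} \<Longrightarrow> (V has_real_derivative V' t) (at t within {0..Y})"
    and dV': "\<And>t. t \<in> {0..Y} \<Longrightarrow> (V' has_real_derivative (- f t)) (at t within {0..Y})"
  shows "((\<lambda>t. f t * tf g0 rs t) has_integral
           (g0 * (V' 0 - V' Y) + (\<Sum>(c,s)\<leftarrow>rs. c * (V Y - V s - V' Y * (Y - s))))) {0..Y}"
  using assms(2)
proof (induction rs)
  case Nil
  have "((\<lambda>t. - f t) has_integral (V' Y - V' 0)) {0..Y}"
    by (rule fundamental_theorem_of_calculus) (use assms dV' in \<open>auto simp: has_real_derivative_iff_has_vector_derivative\<close>)
  from has_integral_mult_right[OF has_integral_neg[OF this], of g0]
  show ?case by (simp add: tf_def algebra_simps)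
next
  case (Cons a rs)
  obtain c s where a: "a = (c,s)" by force
  have s: "0 \<le> s" "s \<le> Y" using Cons.prems a by auto
  from has_integral_add[OF has_integral_mult_right[OF fs_single[OF s fc dV dV'], of c] Cons.IH]
  show ?case using Cons.prems unfolding a by (simp add: tf_def algebra_simps)
qed



lemma sum_alg:
  fixes u V :: "real \<Rightarrow> real"
  shows "(\<Sum>(c,s)\<leftarrow>rs. c * (u Y - u s)) - (\<Sum>(c,s)\<leftarrow>rs. c * (V Y - V s - V'Y * (Y - s))) =
   (\<Sum>(c,s)\<leftarrow>rs. c * ((u Y - V Y) - (u s - V s))) + V'Y * (\<Sum>(c,s)\<leftarrow>rs. c * (Y - s))"
  by (induction rs) (auto simp: algebra_simps)

lemma tf_at:
  assumes "\<forall>(c,s)\<in>set rs. s \<le> Y"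
  shows "tf g0 rs Y = g0 + (\<Sum>(c,s)\<leftarrow>rs. c * (Y - s))"
  using assms by (induction rs arbitrary: g0) (auto simp: tf_def ramp_def)

lemma weak_reduce:
  fixes u w f V V' :: "real \<Rightarrow> real"
  assumes "0 \<le> Y" "\<forall>(c,s)\<in>set rs. 0 \<le> s \<and> s \<le> Y"
    and prim: "\<And>a b. 0 \<le> a \<Longrightarrow> a \<le> b \<Longrightarrow> b \<le> Y \<Longrightarrow>
       set_integrable lborel {a..b} w \<and> u b - u a = (LINT t:{a..b}|lborel. w t)"
    and fc: "continuous_on {0..Y} f"
    and dV: "\<And>t. t \<in> {0..Y} \<Longrightarrow> (V has_real_derivative V' t) (at t within {0..Y})"
    and dV': "\<And>t. t \<in> {0..Y} \<Longrightarrow> (V' has_real_derivative (- f t)) (at t within {0..Y})"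
  shows "set_integrable lborel {0..Y} (\<lambda>t. w t * dtf rs t - f t * tf g0 rs t)"
    and "(LINT t:{0..Y}|lborel. w t * dtf rs t - f t * tf g0 rs t) =
          (\<Sum>(c,s)\<leftarrow>rs. c * ((u Y - V Y) - (u s - V s))) + V' Y * tf g0 rs Y - V' 0 * g0"
proof -
  note A = ws_list[OF assms(1,2) prim]
  have B1: "set_integrable lborel {0..Y} (\<lambda>t. f t * tf g0 rs t)"
    by (intro borel_integrable_atLeastAtMost' continuous_intros fc tf_cont)
  have B2: "(LINT t:{0..Y}|lborel. f t * tf g0 rs t) =
      g0 * (V' 0 - V' Y) + (\<Sum>(c,s)\<leftarrow>rs. c * (V Y - V s - V' Y * (Y - s)))"
    by (rule hk_to_lint[OF B1 fs_list[OF assms(1,2) fc dV dV']])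
  show "set_integrable lborel {0..Y} (\<lambda>t. w t * dtf rs t - f t * tf g0 rs t)"
    using A B1 by auto
  have "(LINT t:{0..Y}|lborel. w t * dtf rs t - f t * tf g0 rs t) =
     (\<Sum>(c,s)\<leftarrow>rs. c * (u Y - u s)) - (g0 * (V' 0 - V' Y) + (\<Sum>(c,s)\<leftarrow>rs. c * (V Y - V s - V' Y * (Y - s))))"
    using set_integral_diff(2)[OF conjunct1[OF A] B1] A B2 by simp
  also have "\<dots> = (\<Sum>(c,s)\<leftarrow>rs. c * ((u Y - V Y) - (u s - V s))) + V' Y * tf g0 rs Y - V' 0 * g0"
  proof -
    have tY: "tf g0 rs Y = g0 + (\<Sum>(c,s)\<leftarrow>rs. c * (Y - s))"
      by (rule tf_at) (use assms(2) in auto)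
    show ?thesis using sum_alg[of u Y rs V "V' Y"] unfolding tY by (simp add: algebra_simps)
  qed
  finally show "(LINT t:{0..Y}|lborel. w t * dtf rs t - f t * tf g0 rs t) =
          (\<Sum>(c,s)\<leftarrow>rs. c * ((u Y - V Y) - (u s - V s))) + V' Y * tf g0 rs Y - V' 0 * g0" .
qed

definition tent :: "real \<Rightarrow> real \<Rightarrow> (real \<times> real) list" where
  "tent x y = [(1/x, 0), (-(1/x + 1/(y-x)), x), (1/(y-x), y)]"

lemma tent_props:
  assumes "0 < x" "x < y"
  shows "\<forall>(c,s)\<in>set (tent x y). 0 \<le> s \<and> s \<le> y" "tf 0 (tent x y) y = 0" "tf 0 (tent x y) 0 = 0"
    "(\<Sum>(c,s)\<leftarrow>tent x y. c) = 0"
proof -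
  show "\<forall>(c,s)\<in>set (tent x y). 0 \<le> s \<and> s \<le> y" using assms by (auto simp: tent_def)
  show "tf 0 (tent x y) y = 0" using assms by (auto simp: tent_def tf_def ramp_def field_simps)
  show "tf 0 (tent x y) 0 = 0" using assms by (auto simp: tent_def tf_def ramp_def field_simps)
  show "(\<Sum>(c,s)\<leftarrow>tent x y. c) = 0" by (simp add: tent_def)
qed

lemma affine_from_slopes:
  fixes z :: "real \<Rightarrow> real"
  assumes "0 < T" and sl: "\<And>x y. 0 < x \<Longrightarrow> x < y \<Longrightarrow> y \<le> T \<Longrightarrow> (z x - z 0) / x = (z y - z x) / (y - x)"
  shows "\<And>t. t \<in> {0..T} \<Longrightarrow> z t = z 0 + (z T - z 0) / T * t"
proof -
  fix t assume t: "t \<in> {0..T}"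
  show "z t = z 0 + (z T - z 0) / T * t"
  proof (cases "t = 0 \<or> t = T")
    case True then show ?thesis using assms by auto
  next
    case False
    then have t': "0 < t" "t < T" using t by auto
    define m where "m = (z t - z 0) / t"
    have 1: "z t = z 0 + m * t" using t' by (simp add: m_def field_simps)
    have "m = (z T - z t) / (T - t)" using sl[OF t'(1) t'(2) order_refl] m_def by simp
    then have 2: "z T = z t + m * (T - t)" using t' by (simp add: field_simps)
    have "m = (z T - z 0) / T" using 1 2 assms(1) by (simp add: field_simps)
    then show ?thesis using 1 by simp
  qed
qed

definition Gf :: "(real \<Rightarrow> real) \<Rightarrow> real \<Rightarrow> real" where "Gf f t = integral {0..t} f"
definition Vf :: "(real \<Rightarrow> real) \<Rightarrow> real \<Rightarrow> real" where "Vf f t = - integral {0..t} (Gf f)"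

lemma GV_derivs:
  fixes f :: "real \<Rightarrow> real"
  assumes fc: "continuous_on {0..T} f" and t: "t \<in> {0..T}"
  shows "(Gf f has_real_derivative f t) (at t within {0..T})"
    and "(Vf f has_real_derivative (- Gf f t)) (at t within {0..T})"
    and "((\<lambda>t. - Gf f t) has_real_derivative (- f t)) (at t within {0..T})"
    and "continuous_on {0..T} (Gf f)"
proof -
  have dG: "(Gf f has_real_derivative f t) (at t within {0..T})" if "t \<in> {0..T}" for t
    using integral_has_vector_derivative[OF fc that] unfolding Gf_def
    by (simp add: has_real_derivative_iff_has_vector_derivative)
  then show "(Gf f has_real_derivative f t) (at t within {0..T})" using t .
  show Gc: "continuous_on {0..T} (Gf f)" by (rule DERIV_continuous_on[OF dG])
  have "((\<lambda>u. integral {0..u} (Gf f)) has_vector_derivative Gf f t) (at t within {0..T})"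
    by (rule integral_has_vector_derivative[OF Gc t])
  then show "(Vf f has_real_derivative (- Gf f t)) (at t within {0..T})"
    unfolding Vf_def has_real_derivative_iff_has_vector_derivative[symmetric]
    by (intro derivative_intros) (simp add: has_real_derivative_iff_has_vector_derivative)
  show "((\<lambda>t. - Gf f t) has_real_derivative (- f t)) (at t within {0..T})"
    by (intro derivative_intros dG t)
qed

lemma regularity:
  fixes u w f :: "real \<Rightarrow> real"
  assumes T: "0 < T"
    and prim: "\<And>a b. 0 \<le> a \<Longrightarrow> a \<le> b \<Longrightarrow> b \<le> T \<Longrightarrow>
       set_integrable lborel {a..b} w \<and> u b - u a = (LINT t:{a..b}|lborel. w t)"
    and fc: "continuous_on {0..T} f"
    and tents: "\<And>x y. 0 < x \<Longrightarrow> x < y \<Longrightarrow> y \<le> T \<Longrightarrow>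
       (LINT t:{0..T}|lborel. w t * dtf (tent x y) t - f t * tf 0 (tent x y) t) = 0"
  shows "\<And>t. t \<in> {0..T} \<Longrightarrow> u t = u 0 + (u T - Vf f T - u 0) / T * t + Vf f t"
proof -
  define z where "z t = u t - Vf f t" for t
  have V0: "Vf f 0 = 0" by (simp add: Vf_def)
  have sl: "(z x - z 0) / x = (z y - z x) / (y - x)" if xy: "0 < x" "x < y" "y \<le> T" for x y
  proof -
    note P = tent_props[OF xy(1,2)]
    have tT: "tf 0 (tent x y) T = 0"
      using tf_tail[of "tent x y" y T 0] P xy by auto
    have "(LINT t:{0..T}|lborel. w t * dtf (tent x y) t - f t * tf 0 (tent x y) t) =
      (\<Sum>(c,s)\<leftarrow>tent x y. c * ((u T - Vf f T) - (u s - Vf f s))) + (- Gf f T) * tf 0 (tent x y) T - (- Gf f 0) * 0"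
    proof (rule weak_reduce(2))
      show "0 \<le> T" using xy by auto
      show "\<forall>(c,s)\<in>set (tent x y). 0 \<le> s \<and> s \<le> T" using P(1) xy by auto
      show "\<And>a b. 0 \<le> a \<Longrightarrow> a \<le> b \<Longrightarrow> b \<le> T \<Longrightarrow> set_integrable lborel {a..b} w \<and> u b - u a = (LINT t:{a..b}|lborel. w t)"
        using prim by auto
      show "continuous_on {0..T} f" by (rule fc)
      show "\<And>t. t \<in> {0..T} \<Longrightarrow> (Vf f has_real_derivative - Gf f t) (at t within {0..T})"
        using GV_derivs(2)[OF fc] .
      show "\<And>t. t \<in> {0..T} \<Longrightarrow> ((\<lambda>t. - Gf f t) has_real_derivative - f t) (at t within {0..T})"
        using GV_derivs(3)[OF fc] .
    qed
    then have "(\<Sum>(c,s)\<leftarrow>tent x y. c * ((u T - Vf f T) - (u s - Vf f s))) = 0"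
      using tents[OF xy] tT by simp
    then have "(1/x) * (z T - z 0) + (-(1/x + 1/(y-x))) * (z T - z x) + (1/(y-x)) * (z T - z y) = 0"
      by (simp add: tent_def z_def)
    moreover have "(1/x) * (z T - z 0) + (-(1/x + 1/(y-x))) * (z T - z x) + (1/(y-x)) * (z T - z y)
       = (1/x) * ((z T - z 0) - (z T - z x)) - (1/(y-x)) * ((z T - z x) - (z T - z y))"
      by (simp only: right_diff_distrib distrib_right mult_minus_left)
    ultimately have "(z x - z 0) / x - (z y - z x) / (y - x) = 0"
      by simp
    then show ?thesis by simp
  qed
  fix t assume t: "t \<in> {0..T}"
  from affine_from_slopes[OF T sl t] show "u t = u 0 + (u T - Vf f T - u 0) / T * t + Vf f t"
    by (simp add: z_def V0)
qed



definition fN :: "real \<Rightarrow> (real \<Rightarrow> real) \<Rightarrow> real \<Rightarrow> real" where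
  "fN p u t = \<bar>u t\<bar> powr (p - 2) * u t - u t"

definition wint :: "real \<Rightarrow> (real \<Rightarrow> real) \<Rightarrow> (real \<Rightarrow> real) \<Rightarrow> real \<Rightarrow> (real \<times> real) list \<Rightarrow> real \<Rightarrow> real" where
  "wint p u w g0 rs x = w x * dtf rs x + u x * tf g0 rs x - \<bar>u x\<bar> powr (p - 2) * u x * tf g0 rs x"

lemma wint_eq: "wint p u w g0 rs x = w x * dtf rs x - fN p u x * tf g0 rs x"
  by (simp add: wint_def fN_def algebra_simps)

definition CP :: "real \<Rightarrow> real \<Rightarrow> (real \<Rightarrow> real) \<Rightarrow> (real \<Rightarrow> real) \<Rightarrow> bool" where
  "CP p T u U' \<longleftrightarrow> (\<forall>t\<in>{0..T}. (u has_real_derivative U' t) (at t within {0..T}) \<and>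
      (U' has_real_derivative (- fN p u t)) (at t within {0..T}) \<and> 0 < u t)"

lemma sum_list_pair_cong:
  assumes "\<forall>(c,s)\<in>set rs. F c s = G c s"
  shows "(\<Sum>(c,s)\<leftarrow>rs. F c s) = (\<Sum>(c,s)\<leftarrow>rs. G c s)"
  using assms by (induction rs) auto

lemma sum_list_pair_k:
  fixes k :: real
  shows "(\<Sum>(c,s)\<leftarrow>rs. c * (k * (Y - s))) = k * (\<Sum>(c,s)\<leftarrow>rs. c * (Y - s))"
  by (induction rs) (auto simp: algebra_simps)

lemma u_cont:
  fixes u w :: "real \<Rightarrow> real"
  assumes prim: "\<And>a b. 0 \<le> a \<Longrightarrow> a \<le> b \<Longrightarrow> b \<le> T \<Longrightarrow>
       set_integrable lborel {a..b} w \<and> u b - u a = (LINT t:{a..b}|lborel. w t)"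
    and "0 \<le> T"
  shows "continuous_on {0..T} u"
proof -
  have wi: "w integrable_on {0..T}"
    using set_borel_integral_eq_integral(1) prim[OF order_refl assms(2) order_refl] by auto
  have eq: "u t = u 0 + integral {0..t} w" if "t \<in> {0..T}" for t
    using prim[of 0 t] that set_borel_integral_eq_integral(2)[of "{0..t}" w] by auto
  have "continuous_on {0..T} (\<lambda>t. u 0 + integral {0..t} w)"
    by (rule continuous_on_add[OF continuous_on_const indefinite_integral_continuous_1[OF wi]])
  moreover have "continuous_on {0..T} u = continuous_on {0..T} (\<lambda>t. u 0 + integral {0..t} w)"
    by (rule continuous_on_cong[OF refl eq])
  ultimately show ?thesis by simp
qed

lemma fN_cont:
  assumes "continuous_on S u" "\<forall>t\<in>S. 0 < u t"
  shows "continuous_on S (fN p u)"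
proof -
  have "continuous_on S (\<lambda>t. \<bar>u t\<bar> powr (p - 2))"
    by (rule continuous_on_powr[OF continuous_on_rabs[OF assms(1)] continuous_on_const]) (use assms(2) in auto)
  then show ?thesis unfolding fN_def
    by (intro continuous_on_diff continuous_on_mult assms(1))
qed

lemma post_weak:
  fixes u w :: "real \<Rightarrow> real"
  assumes "0 \<le> Y" "\<forall>(c,s)\<in>set rs. 0 \<le> s \<and> s \<le> Y"
    and prim: "\<And>a b. 0 \<le> a \<Longrightarrow> a \<le> b \<Longrightarrow> b \<le> Y \<Longrightarrow>
       set_integrable lborel {a..b} w \<and> u b - u a = (LINT t:{a..b}|lborel. w t)"
    and fc: "continuous_on {0..Y} (fN p u)"
    and aff: "\<And>t. t \<in> {0..Y} \<Longrightarrow> u t = u 0 + k * t + Vf (fN p u) t"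
  shows "(LINT t:{0..Y}|lborel. wint p u w g0 rs t) = (k - Gf (fN p u) Y) * tf g0 rs Y - k * g0"
proof -
  let ?f = "fN p u"
  have "(LINT t:{0..Y}|lborel. wint p u w g0 rs t) = (LINT t:{0..Y}|lborel. w t * dtf rs t - ?f t * tf g0 rs t)"
    by (simp add: wint_eq)
  also have "\<dots> = (\<Sum>(c,s)\<leftarrow>rs. c * ((u Y - Vf ?f Y) - (u s - Vf ?f s))) + (- Gf ?f Y) * tf g0 rs Y - (- Gf ?f 0) * g0"
  proof (rule weak_reduce(2)[OF assms(1,2) prim fc])
    show "\<And>t. t \<in> {0..Y} \<Longrightarrow> (Vf ?f has_real_derivative - Gf ?f t) (at t within {0..Y})"
      using GV_derivs(2)[OF fc] .
    show "\<And>t. t \<in> {0..Y} \<Longrightarrow> ((\<lambda>t. - Gf ?f t) has_real_derivative - ?f t) (at t within {0..Y})"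
      using GV_derivs(3)[OF fc] .
  qed auto
  also have "(\<Sum>(c,s)\<leftarrow>rs. c * ((u Y - Vf ?f Y) - (u s - Vf ?f s))) = (\<Sum>(c,s)\<leftarrow>rs. c * (k * (Y - s)))"
  proof (rule sum_list_pair_cong)
    show "\<forall>(c,s)\<in>set rs. c * ((u Y - Vf ?f Y) - (u s - Vf ?f s)) = c * (k * (Y - s))"
    proof
      fix x assume x: "x \<in> set rs"
      obtain c s where xe: "x = (c,s)" by force
      have s: "s \<in> {0..Y}" using assms(2) x xe by auto
      have a1: "u s - Vf ?f s = u 0 + k * s" using aff[OF s] by linarith
      have Y: "Y \<in> {0..Y}" using assms(1) by auto
      have a2: "u Y - Vf ?f Y = u 0 + k * Y" using aff[OF Y] by linarith
      have "c * ((u Y - Vf ?f Y) - (u s - Vf ?f s)) = c * (k * (Y - s))"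
        unfolding a1 a2 by (simp add: algebra_simps)
      then show "case x of (c,s) \<Rightarrow> c * ((u Y - Vf ?f Y) - (u s - Vf ?f s)) = c * (k * (Y - s))"
        using xe by simp
    qed
  qed
  also have "\<dots> = k * (tf g0 rs Y - g0)"
  proof -
    have tY: "tf g0 rs Y = g0 + (\<Sum>(c,s)\<leftarrow>rs. c * (Y - s))"
      by (rule tf_at) (use assms(2) in auto)
    show ?thesis unfolding tY by (simp add: sum_list_pair_k)
  qed
  finally show ?thesis by (simp add: Gf_def algebra_simps)
qed

lemma CP_from_aff:
  fixes u :: "real \<Rightarrow> real"
  assumes fc: "continuous_on {0..T} (fN p u)" and pos: "\<forall>t\<in>{0..T}. 0 < u t"
    and aff: "\<And>t. t \<in> {0..T} \<Longrightarrow> u t = u 0 + k * t + Vf (fN p u) t"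
  shows "CP p T u (\<lambda>t. k - Gf (fN p u) t)"
  unfolding CP_def
proof (intro ballI conjI)
  fix t assume t: "t \<in> {0..T}"
  let ?f = "fN p u"
  have dl: "((\<lambda>t. u 0 + k * t) has_real_derivative k) (at t within {0..T})"
    by (auto intro!: derivative_eq_intros)
  have "((\<lambda>t. u 0 + k * t + Vf ?f t) has_real_derivative (k + - Gf ?f t)) (at t within {0..T})"
    by (rule DERIV_add[OF dl GV_derivs(2)[OF fc t]])
  then have "((\<lambda>t. u 0 + k * t + Vf ?f t) has_real_derivative (k - Gf ?f t)) (at t within {0..T})"
    by simp
  then show "(u has_real_derivative k - Gf ?f t) (at t within {0..T})"
  proof (rule has_field_derivative_transform_within[OF _ zero_less_one t])
    fix x assume x: "x \<in> {0..T}"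
    show "u 0 + k * x + Vf ?f x = u x" using aff[OF x] by linarith
  qed
  have "((\<lambda>t. k - Gf ?f t) has_real_derivative (0 - ?f t)) (at t within {0..T})"
    by (intro derivative_intros GV_derivs(1)[OF fc t])
  then show "((\<lambda>t. k - Gf ?f t) has_real_derivative - ?f t) (at t within {0..T})" by simp
  show "0 < u t" using pos t by auto
qed

lemma edge_compact:
  fixes u w :: "real \<Rightarrow> real"
  assumes T: "0 < T" and H1: "H1_on {0..T} u w" and pos: "\<forall>t\<in>{0..T}. 0 < u t"
    and tents: "\<And>x y. 0 < x \<Longrightarrow> x < y \<Longrightarrow> y \<le> T \<Longrightarrow> (LINT t:{0..T}|lborel. wint p u w 0 (tent x y) t) = 0"
  shows "\<exists>U'. CP p T u U' \<and> (\<forall>g0 rs. (\<forall>(c,s)\<in>set rs. 0 \<le> s \<and> s \<le> T) \<longrightarrow>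
            (LINT t:{0..T}|lborel. wint p u w g0 rs t) = U' T * tf g0 rs T - U' 0 * g0)"
proof -
  have prim: "\<And>a b. 0 \<le> a \<Longrightarrow> a \<le> b \<Longrightarrow> b \<le> T \<Longrightarrow>
       set_integrable lborel {a..b} w \<and> u b - u a = (LINT t:{a..b}|lborel. w t)"
    using H1 unfolding H1_on_def by auto
  have uc: "continuous_on {0..T} u" by (rule u_cont[OF prim]) (use T in auto)
  have fc: "continuous_on {0..T} (fN p u)" by (rule fN_cont[OF uc pos])
  define k where "k = (u T - Vf (fN p u) T - u 0) / T"
  have aff: "\<And>t. t \<in> {0..T} \<Longrightarrow> u t = u 0 + k * t + Vf (fN p u) t"
  proof -
    fix t assume t: "t \<in> {0..T}"
    have "u t = u 0 + (u T - Vf (fN p u) T - u 0) / T * t + Vf (fN p u) t"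
    proof (rule regularity[OF T prim fc _ t])
      fix x y assume xy: "0 < x" "x < y" "y \<le> T"
      show "(LINT t:{0..T}|lborel. w t * dtf (tent x y) t - fN p u t * tf 0 (tent x y) t) = 0"
        using tents[OF xy] by (simp add: wint_eq)
    qed auto
    then show "u t = u 0 + k * t + Vf (fN p u) t" by (simp add: k_def)
  qed
  show ?thesis
  proof (intro exI conjI allI impI)
    show "CP p T u (\<lambda>t. k - Gf (fN p u) t)" by (rule CP_from_aff[OF fc pos aff])
    fix g0 :: real and rs :: "(real \<times> real) list"
    assume rs: "\<forall>(c,s)\<in>set rs. 0 \<le> s \<and> s \<le> T"
    have "(LINT t:{0..T}|lborel. wint p u w g0 rs t) = (k - Gf (fN p u) T) * tf g0 rs T - k * g0"
      by (rule post_weak[OF _ rs prim fc aff]) (use T in auto)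
    then show "(LINT t:{0..T}|lborel. wint p u w g0 rs t) = (k - Gf (fN p u) T) * tf g0 rs T - (k - Gf (fN p u) 0) * g0"
      by (simp add: Gf_def)
  qed
qed



lemma wint_zero: "dtf rs t = 0 \<Longrightarrow> tf g0 rs t = 0 \<Longrightarrow> wint p u w g0 rs t = 0"
  by (simp add: wint_def)

lemma edge_half:
  fixes u w :: "real \<Rightarrow> real"
  assumes H1: "H1_on {0..} u w" and pos: "\<forall>t\<in>{0..}. 0 < u t"
    and tents: "\<And>x y. 0 < x \<Longrightarrow> x < y \<Longrightarrow> (LINT t:{0..}|lborel. wint p u w 0 (tent x y) t) = 0"
  shows "\<exists>U'. (\<forall>T>0. CP p T u U') \<and> (\<forall>g0 rs Y. 0 \<le> Y \<longrightarrow> (\<forall>(c,s)\<in>set rs. 0 \<le> s \<and> s \<le> Y) \<longrightarrow>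
            (\<Sum>(c,s)\<leftarrow>rs. c) = 0 \<longrightarrow> tf g0 rs Y = 0 \<longrightarrow>
            (LINT t:{0..}|lborel. wint p u w g0 rs t) = - U' 0 * g0)"
proof -
  have prim: "\<And>a b. 0 \<le> a \<Longrightarrow> a \<le> b \<Longrightarrow>
       set_integrable lborel {a..b} w \<and> u b - u a = (LINT t:{a..b}|lborel. w t)"
    using H1 unfolding H1_on_def by auto
  have fc: "continuous_on {0..T} (fN p u)" if "0 \<le> T" for T
  proof -
    have "continuous_on {0..T} u" by (rule u_cont[OF prim that]) auto
    then show ?thesis by (rule fN_cont) (use pos in auto)
  qed
  let ?V = "Vf (fN p u)"
  have regT: "u t = u 0 + (u T - ?V T - u 0) / T * t + ?V t" if T: "0 < T" and t: "t \<in> {0..T}" for T t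
  proof (rule regularity[OF T _ fc[of T] _ t])
    show "\<And>a b. 0 \<le> a \<Longrightarrow> a \<le> b \<Longrightarrow> b \<le> T \<Longrightarrow> set_integrable lborel {a..b} w \<and> u b - u a = (LINT t:{a..b}|lborel. w t)"
      using prim by auto
    show "0 \<le> T" using T by auto
    fix x y assume xy: "0 < x" "x < y" "y \<le> T"
    note P = tent_props[OF xy(1,2)]
    have "(LINT t:{0..}|lborel. wint p u w 0 (tent x y) t) = (LINT t:{0..T}|lborel. wint p u w 0 (tent x y) t)"
    proof (rule set_integrable_restrict_zero(2))
      show "{0..T} \<subseteq> {0::real..}" by auto
      fix t :: real assume "t \<in> {0..}" "t \<notin> {0..T}"
      then have "y < t" using xy by auto
      then show "wint p u w 0 (tent x y) t = 0"
        using dtf_tail0[of "tent x y" y t 0] P by (intro wint_zero) auto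
    qed
    then show "(LINT t:{0..T}|lborel. w t * dtf (tent x y) t - fN p u t * tf 0 (tent x y) t) = 0"
      using tents[OF xy(1,2)] by (simp add: wint_eq)
  qed
  define k where "k = u 1 - ?V 1 - u 0"
  have aff: "u t = u 0 + k * t + ?V t" if t: "0 \<le> t" for t
  proof -
    define T where "T = max 1 t"
    have T: "0 < T" "1 \<in> {0..T}" "t \<in> {0..T}" using t by (auto simp: T_def)
    have "u 1 = u 0 + (u T - ?V T - u 0) / T * 1 + ?V 1" by (rule regT[OF T(1,2)])
    then have "(u T - ?V T - u 0) / T = k" by (simp add: k_def)
    with regT[OF T(1,3)] show ?thesis by simp
  qed
  show ?thesis
  proof (intro exI conjI allI impI)
    fix T :: real assume T: "0 < T"
    show "CP p T u (\<lambda>t. k - Gf (fN p u) t)"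
    proof (rule CP_from_aff[OF fc])
      show "0 \<le> T" using T by auto
      show "\<forall>t\<in>{0..T}. 0 < u t" using pos by auto
      fix t assume "t \<in> {0..T}"
      then show "u t = u 0 + k * t + Vf (fN p u) t" by (intro aff) auto
    qed
  next
    fix g0 Y :: real and rs :: "(real \<times> real) list"
    assume Y: "0 \<le> Y" and rs: "\<forall>(c,s)\<in>set rs. 0 \<le> s \<and> s \<le> Y" and sc: "(\<Sum>(c,s)\<leftarrow>rs. c) = 0"
      and tY: "tf g0 rs Y = 0"
    have "(LINT t:{0..}|lborel. wint p u w g0 rs t) = (LINT t:{0..Y}|lborel. wint p u w g0 rs t)"
    proof (rule set_integrable_restrict_zero(2))
      show "{0..Y} \<subseteq> {0::real..}" by auto
      fix t :: real assume "t \<in> {0..}" "t \<notin> {0..Y}"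
      then have "Y < t" by auto
      then show "wint p u w g0 rs t = 0"
        using dtf_tail0[of rs Y t g0] rs sc tY by (intro wint_zero) auto
    qed
    also have "\<dots> = (k - Gf (fN p u) Y) * tf g0 rs Y - k * g0"
    proof (rule post_weak[OF Y rs _ fc[OF Y]])
      fix t assume "t \<in> {0..Y}"
      then show "u t = u 0 + k * t + Vf (fN p u) t" by (intro aff) auto
    qed (use prim in auto)
    finally show "(LINT t:{0..}|lborel. wint p u w g0 rs t) = - (k - Gf (fN p u) 0) * g0"
      using tY by (simp add: Gf_def)
  qed
qed



definition En :: "real \<Rightarrow> real \<Rightarrow> real \<Rightarrow> real" where
  "En p a b = b\<^sup>2 / 2 - a\<^sup>2 / 2 + a powr p / p"

lemma powr_m1: fixes x p :: real shows "0 < x \<Longrightarrow> x powr (p - 1) = x powr (p - 2) * x"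
proof -
  assume x: "0 < x"
  have "x powr (p - 1) = x powr ((p - 2) + 1)" by simp
  also have "\<dots> = x powr (p - 2) * x powr 1" by (rule powr_add)
  also have "\<dots> = x powr (p - 2) * x" using x by simp
  finally show ?thesis .
qed

lemma powr_p2: fixes x p :: real shows "0 < x \<Longrightarrow> x powr p = x powr (p - 2) * x\<^sup>2"
proof -
  assume x: "0 < x"
  have "x powr p = x powr ((p - 2) + 2)" by simp
  also have "\<dots> = x powr (p - 2) * x powr 2" by (rule powr_add)
  also have "\<dots> = x powr (p - 2) * x\<^sup>2" using x by (simp add: powr_numeral)
  finally show ?thesis .
qed

lemma deriv0_hasderiv: "(f has_real_derivative 0) F \<Longrightarrow> (f has_derivative (\<lambda>h. 0)) F"
  unfolding has_field_derivative_def by (simp add: mult_zero_left[abs_def])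

lemma CP_cont:
  assumes "CP p T u U'"
  shows "continuous_on {0..T} u" "continuous_on {0..T} U'"
  using assms unfolding CP_def by (auto intro!: DERIV_continuous_on)

lemma energy_const:
  assumes cp: "CP p T u U'" and T: "0 \<le> T" and pp: "p \<noteq> 0"
  shows "\<forall>t\<in>{0..T}. En p (u t) (U' t) = En p (u 0) (U' 0)"
proof -
  have d: "((\<lambda>t. En p (u t) (U' t)) has_derivative (\<lambda>h. 0)) (at t within {0..T})" if t: "t \<in> {0..T}" for t
  proof -
    have du: "(u has_real_derivative U' t) (at t within {0..T})"
      and dU: "(U' has_real_derivative (- fN p u t)) (at t within {0..T})"
      and pos: "0 < u t" using cp t unfolding CP_def by auto
    have A: "((\<lambda>t. (U' t)^2 / 2) has_real_derivative (of_nat 2 * (- fN p u t * U' t ^ (2 - Suc 0))) / 2) (at t within {0..T})"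
      by (intro DERIV_cdivide DERIV_power dU)
    have B: "((\<lambda>t. (u t)^2 / 2) has_real_derivative (of_nat 2 * (U' t * u t ^ (2 - Suc 0))) / 2) (at t within {0..T})"
      by (intro DERIV_cdivide DERIV_power du)
    have C: "((\<lambda>t. u t powr p / p) has_real_derivative (p * u t powr (p - 1) * U' t) / p) (at t within {0..T})"
      by (intro DERIV_cdivide DERIV_chain2[OF has_real_derivative_powr[OF pos] du])
    have "((\<lambda>t. En p (u t) (U' t)) has_real_derivative
       (of_nat 2 * (- fN p u t * U' t ^ (2 - Suc 0))) / 2 - (of_nat 2 * (U' t * u t ^ (2 - Suc 0))) / 2 + (p * u t powr (p - 1) * U' t) / p) (at t within {0..T})"
      unfolding En_def by (intro DERIV_add DERIV_diff A B C)
    moreover have "(of_nat 2 * (- fN p u t * U' t ^ (2 - Suc 0))) / 2 - (of_nat 2 * (U' t * u t ^ (2 - Suc 0))) / 2 + (p * u t powr (p - 1) * U' t) / p = 0"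
    proof -
      have f: "fN p u t = u t powr (p - 2) * u t - u t" using pos by (simp add: fN_def)
      have "p * u t powr (p - 1) * U' t / p = u t powr (p - 2) * u t * U' t"
        using pos pp by (simp add: powr_m1)
      then show ?thesis unfolding f by (simp add: field_simps)
    qed
    ultimately show ?thesis by (simp add: deriv0_hasderiv)
  qed
  obtain c where "\<forall>x\<in>{0..T}. En p (u x) (U' x) = c"
    using has_derivative_zero_constant[OF convex_real_interval(5) d] by (auto simp: atLeastAtMost_def)
  then show ?thesis using T by auto
qed



definition Kp :: "real \<Rightarrow> real" where "Kp p = p powr (1 / (p - 2))"
definition Mb :: "real \<Rightarrow> real \<Rightarrow> real" where "Mb p A = max (Kp p) (sqrt (2 * \<bar>A\<bar>))"

lemma Kp_pos: "p > 2 \<Longrightarrow> 0 < Kp p" by (simp add: Kp_def)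

lemma Kp_pow: "p > 2 \<Longrightarrow> Kp p powr (p - 2) = p"
  by (simp add: Kp_def powr_powr)

lemma Mb_pos: "p > 2 \<Longrightarrow> 0 < Mb p A"
  using Kp_pos[of p] by (simp add: Mb_def)

lemma Mb_mono: "\<bar>A\<bar> \<le> \<bar>A'\<bar> \<Longrightarrow> Mb p A \<le> Mb p A'"
proof -
  assume "\<bar>A\<bar> \<le> \<bar>A'\<bar>"
  then have "sqrt (2 * \<bar>A\<bar>) \<le> sqrt (2 * \<bar>A'\<bar>)" by simp
  then show ?thesis unfolding Mb_def by linarith
qed

lemma Mb_bound:
  fixes x p A :: real
  assumes p: "p > 2" and x: "0 < x" and le: "x powr p / p - x\<^sup>2 / 2 \<le> A"
  shows "x \<le> Mb p A"
proof (cases "x \<le> Kp p")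
  case True then show ?thesis by (simp add: Mb_def)
next
  case False
  then have "Kp p powr (p - 2) \<le> x powr (p - 2)"
    using Kp_pos[OF p] p by (intro powr_mono2) auto
  then have px: "p \<le> x powr (p - 2)" using Kp_pow[OF p] by simp
  have "x powr p = x powr (p - 2) * x\<^sup>2" using x by (rule powr_p2)
  also have "\<dots> \<ge> p * x\<^sup>2" using px by (intro mult_right_mono) auto
  finally have "x\<^sup>2 \<le> x powr p / p" using p by (simp add: field_simps)
  then have "x\<^sup>2 \<le> 2 * \<bar>A\<bar>" using le by linarith
  then have "x \<le> sqrt (2 * \<bar>A\<bar>)" using x by (simp add: real_le_rsqrt)
  then show ?thesis by (simp add: Mb_def)
qed

lemma pos_energy_big:
  fixes x p :: real
  assumes p: "p > 2" and x: "0 < x" and gt: "x powr p / p - x\<^sup>2 / 2 > 0"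
  shows "1 < x powr (p - 2)"
proof -
  have "x powr p = x powr (p - 2) * x\<^sup>2" using x by (rule powr_p2)
  with gt have "x powr (p - 2) * x\<^sup>2 / p > x\<^sup>2 / 2" by simp
  then have "x powr (p - 2) * x\<^sup>2 * 2 > x\<^sup>2 * p" using p by (simp add: field_simps)
  then have "x powr (p - 2) * 2 > p" using x by (simp add: mult.commute mult.left_commute)
  then show ?thesis using p by simp
qed

lemma cp_ftc:
  assumes cp: "CP p T u U'" and ab: "0 \<le> a" "a \<le> b" "b \<le> T"
  shows "(U' has_integral (u b - u a)) {a..b}" "((\<lambda>t. - fN p u t) has_integral (U' b - U' a)) {a..b}"
proof -
  have sub: "{a..b} \<subseteq> {0..T}" using ab by auto
  show "(U' has_integral (u b - u a)) {a..b}"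
  proof (rule fundamental_theorem_of_calculus[OF ab(2)])
    fix x assume x: "x \<in> {a..b}"
    then have "(u has_real_derivative U' x) (at x within {0..T})" using cp sub unfolding CP_def by auto
    then show "(u has_vector_derivative U' x) (at x within {a..b})"
      using DERIV_subset[OF _ sub] by (simp add: has_real_derivative_iff_has_vector_derivative[symmetric])
  qed
  show "((\<lambda>t. - fN p u t) has_integral (U' b - U' a)) {a..b}"
  proof (rule fundamental_theorem_of_calculus[OF ab(2)])
    fix x assume x: "x \<in> {a..b}"
    then have "(U' has_real_derivative - fN p u x) (at x within {0..T})" using cp sub unfolding CP_def by auto
    then show "(U' has_vector_derivative - fN p u x) (at x within {a..b})"
      using DERIV_subset[OF _ sub] by (simp add: has_real_derivative_iff_has_vector_derivative[symmetric])
  qed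
qed

lemma fN_nonneg:
  fixes p :: real
  assumes p: "p > 2" and big: "1 < y powr (p - 2)" and y: "0 < y" and yx: "y \<le> x"
  shows "0 \<le> fN p (\<lambda>_. x) t"
proof -
  have "y powr (p - 2) \<le> x powr (p - 2)" using p y yx by (intro powr_mono2) auto
  then have "1 \<le> x powr (p - 2)" using big by simp
  then have "x \<le> x powr (p - 2) * x" using y yx by (simp add: mult_le_cancel_right1)
  then show ?thesis using y yx by (simp add: fN_def)
qed

lemma sign0:
  assumes p: "p > 2" and cp: "CP p T u U'" and T: "0 < T"
    and E: "\<forall>t\<in>{0..T}. En p (u t) (U' t) = E" and Epos: "E > 0"
    and x1: "x1 \<in> {0..T}" "U' x1 = 0"
  shows "0 \<le> U' 0"
proof (rule ccontr)
  assume "\<not> 0 \<le> U' 0"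
  then have neg: "U' 0 < 0" by simp
  note cU = CP_cont(2)[OF cp]
  define S where "S = {0..T} \<inter> U' -` {0..}"
  have Sc: "closed S" unfolding S_def by (rule continuous_closed_preimage[OF cU]) auto
  have Sne: "S \<noteq> {}" using x1 by (auto simp: S_def)
  have Sb: "bdd_below S" by (rule bdd_belowI[of _ 0]) (auto simp: S_def)
  define m where "m = Inf S"
  have mS: "m \<in> S" unfolding m_def by (rule closed_contains_Inf[OF Sne Sb Sc])
  have m: "0 \<le> m" "m \<le> T" "0 \<le> U' m" using mS by (auto simp: S_def)
  have lower: "m \<le> t" if "t \<in> S" for t unfolding m_def by (rule cInf_lower[OF that Sb])
  obtain x where x: "0 \<le> x" "x \<le> m" "U' x = 0"
    using IVT'[of U' 0 0 m] neg m continuous_on_subset[OF cU, of "{0..m}"] by auto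
  have "x \<in> S" using x m by (auto simp: S_def)
  then have "x = m" using lower x by force
  then have Um: "U' m = 0" using x by simp
  have nonpos: "U' t \<le> 0" if "t \<in> {0..m}" for t
  proof (cases "t = m")
    case True then show ?thesis using Um by simp
  next
    case False
    then have "t < m" using that by auto
    then have "t \<notin> S" using lower by force
    then show ?thesis using that m by (auto simp: S_def)
  qed
  have upos: "0 < u t" if "t \<in> {0..T}" for t using cp that unfolding CP_def by auto
  have "En p (u m) (U' m) = E" using E m by auto
  then have gt: "u m powr p / p - (u m)\<^sup>2 / 2 > 0" using Um Epos by (simp add: En_def)
  have um: "0 < u m" using upos m by auto
  have big: "1 < u m powr (p - 2)" by (rule pos_energy_big[OF p um gt])
  have ge: "u m \<le> u t" if t: "t \<in> {0..m}" for t
  proof -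
    have "(U' has_integral (u m - u t)) {t..m}" by (rule cp_ftc(1)[OF cp]) (use t m in auto)
    from has_integral_le[OF this has_integral_0[of "{t..m}"]] have "u m - u t \<le> 0"
      using nonpos t by auto
    then show ?thesis by simp
  qed
  have hi: "((\<lambda>t. - fN p u t) has_integral (U' m - U' 0)) {0..m}" by (rule cp_ftc(2)[OF cp]) (use m in auto)
  have nf: "- fN p u t \<le> 0" if t: "t \<in> {0..m}" for t
  proof -
    have "0 \<le> fN p (\<lambda>_. u t) t"
      by (rule fN_nonneg[OF p big um ge[OF t]])
    then show "- fN p u t \<le> 0" by (simp add: fN_def)
  qed
  have "U' m - U' 0 \<le> 0" using has_integral_le[OF hi has_integral_0[of "{0..m}"]] nf by auto
  then show False using Um neg by simp
qed



lemma signT: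
  assumes p: "p > 2" and cp: "CP p T u U'" and T: "0 < T"
    and E: "\<forall>t\<in>{0..T}. En p (u t) (U' t) = E" and Epos: "E > 0"
    and x1: "x1 \<in> {0..T}" "U' x1 = 0"
  shows "U' T \<le> 0"
proof (rule ccontr)
  assume "\<not> U' T \<le> 0"
  then have posT: "0 < U' T" by simp
  note cU = CP_cont(2)[OF cp]
  define S where "S = {0..T} \<inter> U' -` {..0}"
  have Sc: "closed S" unfolding S_def by (rule continuous_closed_preimage[OF cU]) auto
  have Sne: "S \<noteq> {}" using x1 by (auto simp: S_def)
  have Sb: "bdd_above S" by (rule bdd_aboveI[of _ T]) (auto simp: S_def)
  define m where "m = Sup S"
  have mS: "m \<in> S" unfolding m_def by (rule closed_contains_Sup[OF Sne Sb Sc])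
  have m: "0 \<le> m" "m \<le> T" "U' m \<le> 0" using mS by (auto simp: S_def)
  have upper: "t \<le> m" if "t \<in> S" for t unfolding m_def by (rule cSup_upper[OF that Sb])
  obtain x where x: "m \<le> x" "x \<le> T" "U' x = 0"
    using IVT'[of U' m 0 T] posT m continuous_on_subset[OF cU, of "{m..T}"] by auto
  have "x \<in> S" using x m by (auto simp: S_def)
  then have "x = m" using upper x by force
  then have Um: "U' m = 0" using x by simp
  have nonneg: "0 \<le> U' t" if "t \<in> {m..T}" for t
  proof (cases "t = m")
    case True then show ?thesis using Um by simp
  next
    case False
    then have "m < t" using that by auto
    then have "t \<notin> S" using upper by force
    then show ?thesis using that m by (auto simp: S_def)
  qed
  have upos: "0 < u t" if "t \<in> {0..T}" for t using cp that unfolding CP_def by auto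
  have "En p (u m) (U' m) = E" using E m by auto
  then have gt: "u m powr p / p - (u m)\<^sup>2 / 2 > 0" using Um Epos by (simp add: En_def)
  have um: "0 < u m" using upos m by auto
  have big: "1 < u m powr (p - 2)" by (rule pos_energy_big[OF p um gt])
  have ge: "u m \<le> u t" if t: "t \<in> {m..T}" for t
  proof -
    have "(U' has_integral (u t - u m)) {m..t}" by (rule cp_ftc(1)[OF cp]) (use t m in auto)
    from has_integral_le[OF has_integral_0[of "{m..t}"] this] have "0 \<le> u t - u m"
      using nonneg t by auto
    then show ?thesis by simp
  qed
  have hi: "((\<lambda>t. - fN p u t) has_integral (U' T - U' m)) {m..T}" by (rule cp_ftc(2)[OF cp]) (use m in auto)
  have nf: "- fN p u t \<le> 0" if t: "t \<in> {m..T}" for t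
  proof -
    have "0 \<le> fN p (\<lambda>_. u t) t"
      by (rule fN_nonneg[OF p big um ge[OF t]])
    then show "- fN p u t \<le> 0" by (simp add: fN_def)
  qed
  have "U' T - U' m \<le> 0" using has_integral_le[OF hi has_integral_0[of "{m..T}"]] nf by auto
  then show False using Um posT by simp
qed

lemma crit_bound:
  assumes p: "p > 2" and u: "0 < x" and e: "En p x 0 \<le> A"
  shows "x \<le> Mb p A"
  by (rule Mb_bound[OF p u]) (use e in \<open>simp add: En_def\<close>)

lemma max_bound:
  assumes p: "p > 2" and cp: "CP p T u U'" and T: "0 < T"
    and E: "\<forall>t\<in>{0..T}. En p (u t) (U' t) = E" and A: "E \<le> A"
  shows "\<forall>x\<in>{0..T}. u x \<le> max (max (u 0) (u T)) (Mb p A)"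
proof -
  obtain x0 where x0: "x0 \<in> {0..T}" "\<forall>y\<in>{0..T}. u y \<le> u x0"
    using continuous_attains_sup[OF compact_Icc _ CP_cont(1)[OF cp]] T by auto
  have "u x0 \<le> max (max (u 0) (u T)) (Mb p A)"
  proof (cases "x0 = 0 \<or> x0 = T")
    case True then show ?thesis by auto
  next
    case False
    then have xi: "0 < x0" "x0 < T" using x0 by auto
    have "x0 \<in> interior {0..T}" using xi by simp
    then have "at x0 within {0..T} = at x0" by (rule at_within_interior)
    moreover have "(u has_real_derivative U' x0) (at x0 within {0..T})" using cp x0 unfolding CP_def by auto
    ultimately have d: "(u has_real_derivative U' x0) (at x0)" by simp
    have "U' x0 = 0"
    proof (rule DERIV_local_max[OF d])
      show "0 < min x0 (T - x0)" using xi by simp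
      show "\<forall>y. \<bar>x0 - y\<bar> < min x0 (T - x0) \<longrightarrow> u y \<le> u x0"
      proof (intro allI impI)
        fix y assume "\<bar>x0 - y\<bar> < min x0 (T - x0)"
        then have "y \<in> {0..T}" by (auto simp: abs_less_iff)
        then show "u y \<le> u x0" using x0(2) by auto
      qed
    qed
    moreover have "En p (u x0) (U' x0) = E" using E x0 by blast
    ultimately have "En p (u x0) 0 \<le> A" using A by simp
    moreover have "0 < u x0" using cp x0 unfolding CP_def by auto
    ultimately have "u x0 \<le> Mb p A" using crit_bound[OF p] by blast
    then show ?thesis by simp
  qed
  then show ?thesis using x0 by force
qed



lemma h_bound:
  fixes x p B :: real
  assumes p: "p > 2" and x: "0 < x" "x \<le> B"
  shows "\<bar>2 * x\<^sup>2 - (1 + 2 / p) * x powr p\<bar> \<le> (2 + (1 + 2 / p) * B powr (p - 2)) * x\<^sup>2"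
proof -
  have e: "x powr p = x powr (p - 2) * x\<^sup>2" using x by (intro powr_p2)
  have m: "x powr (p - 2) \<le> B powr (p - 2)" using p x by (intro powr_mono2) auto
  have y0: "0 \<le> x powr p" by simp
  have y1: "x powr p \<le> B powr (p - 2) * x\<^sup>2" unfolding e by (intro mult_right_mono m) auto
  have "0 < 2 / p" using p by simp
  then have c: "0 < 1 + 2 / p" by linarith
  have cy: "(1 + 2 / p) * x powr p \<le> (1 + 2 / p) * (B powr (p - 2) * x\<^sup>2)"
    by (intro mult_left_mono y1) (use c in auto)
  have cy0: "0 \<le> (1 + 2 / p) * x powr p" using c y0 by simp
  have x2: "0 \<le> x\<^sup>2" by simp
  have eq: "(2 + (1 + 2 / p) * B powr (p - 2)) * x\<^sup>2 = 2 * x\<^sup>2 + (1 + 2 / p) * (B powr (p - 2) * x\<^sup>2)"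
    by (simp add: algebra_simps)
  show ?thesis unfolding abs_le_iff eq using cy cy0 x2 by linarith
qed

lemma int_le_S:
  fixes u :: "real \<Rightarrow> real"
  assumes c: "continuous_on {0..T} u" and L2: "set_integrable lborel {0..} (\<lambda>x. (u x)\<^sup>2)"
  shows "integral {0..T} (\<lambda>x. (u x)\<^sup>2) \<le> (LINT x:{0..}|lborel. (u x)\<^sup>2)"
proof -
  have i: "set_integrable lborel {0..T} (\<lambda>x. (u x)\<^sup>2)"
    by (intro borel_integrable_atLeastAtMost' continuous_intros c)
  have "integral {0..T} (\<lambda>x. (u x)\<^sup>2) = (LINT x:{0..T}|lborel. (u x)\<^sup>2)"
    using set_borel_integral_eq_integral(2)[OF i] by simp
  also have "\<dots> \<le> (LINT x:{0..}|lborel. (u x)\<^sup>2)"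
    unfolding set_lebesgue_integral_def
  proof (rule integral_mono)
    show "integrable lborel (\<lambda>x. indicat_real {0..T} x *\<^sub>R (u x)\<^sup>2)" using i unfolding set_integrable_def .
    show "integrable lborel (\<lambda>x. indicat_real {0..} x *\<^sub>R (u x)\<^sup>2)" using L2 unfolding set_integrable_def .
    fix x show "indicat_real {0..T} x *\<^sub>R (u x)\<^sup>2 \<le> indicat_real {0..} x *\<^sub>R (u x)\<^sup>2"
      by (auto simp: indicator_def)
  qed
  finally show ?thesis .
qed

lemma half_zero:
  assumes p: "p > 2" and cp: "\<And>T. 0 < T \<Longrightarrow> CP p T u U'"
    and L2: "set_integrable lborel {0..} (\<lambda>x. (u x)\<^sup>2)"
  shows "En p (u 0) (U' 0) = 0"
proof -
  define E0 where "E0 = En p (u 0) (U' 0)"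
  have Et: "En p (u t) (U' t) = E0" if t: "0 \<le> t" for t
  proof -
    have cpT: "CP p (t + 1) u U'" using t by (intro cp) simp
    have H: "\<forall>s\<in>{0..t + 1}. En p (u s) (U' s) = En p (u 0) (U' 0)"
      by (rule energy_const[OF cpT]) (use t p in auto)
    have tin: "t \<in> {0..t + 1}" using t by simp
    show ?thesis using bspec[OF H tin] unfolding E0_def .
  qed
  have upos: "0 < u t" if "0 \<le> t" for t
    using cp[of "t + 1"] that unfolding CP_def by auto
  define B where "B = Mb p E0"
  have ub: "u t \<le> B" if t: "0 \<le> t" for t
  proof -
    have e: "(U' t)\<^sup>2 / 2 - (u t)\<^sup>2 / 2 + u t powr p / p = E0"
      using Et[OF t] by (simp add: En_def)
    have "0 \<le> (U' t)\<^sup>2 / 2" by simp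
    then have "u t powr p / p - (u t)\<^sup>2 / 2 \<le> E0" using e by linarith
    then show ?thesis unfolding B_def by (rule Mb_bound[OF p upos[OF t]])
  qed
  have B0: "0 < B" unfolding B_def by (rule Mb_pos[OF p])
  define B1 where "B1 = sqrt (2 * \<bar>E0\<bar> + B\<^sup>2)"
  have Ub: "\<bar>U' t\<bar> \<le> B1" if t: "0 \<le> t" for t
  proof -
    have "(U' t)\<^sup>2 = 2 * E0 + (u t)\<^sup>2 - 2 * (u t powr p / p)"
      using Et[OF t] by (simp add: En_def field_simps)
    moreover have "0 \<le> u t powr p / p" using p by simp
    moreover have "(u t)\<^sup>2 \<le> B\<^sup>2" using ub[OF t] upos[OF t] by (intro power_mono) auto
    ultimately have "\<bar>U' t\<bar>\<^sup>2 \<le> 2 * \<bar>E0\<bar> + B\<^sup>2" by simp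
    then show ?thesis unfolding B1_def by (rule real_le_rsqrt)
  qed
  have prodb: "\<bar>u t * U' t\<bar> \<le> B * B1" if t: "0 \<le> t" for t
    unfolding abs_mult using ub[OF t] upos[OF t] Ub[OF t] by (intro mult_mono) auto
  define K where "K = 2 + (1 + 2 / p) * B powr (p - 2)"
  define S where "S = (LINT x:{0..}|lborel. (u x)\<^sup>2)"
  have K0: "0 \<le> K" using p unfolding K_def by (simp add: add_nonneg_nonneg)
  have main: "\<bar>2 * E0 * T\<bar> \<le> 2 * (B * B1) + K * S" if T: "0 < T" for T
  proof -
    have cpT: "CP p T u U'" by (rule cp[OF T])
    have uc: "continuous_on {0..T} u" by (rule CP_cont(1)[OF cpT])
    have ibp: "((\<lambda>t. U' t * U' t + (- fN p u t) * u t) has_integral (u T * U' T - u 0 * U' 0)) {0..T}"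
    proof (rule fundamental_theorem_of_calculus)
      show "0 \<le> T" using T by simp
      fix t assume t: "t \<in> {0..T}"
      have "((\<lambda>t. u t * U' t) has_real_derivative U' t * U' t + (- fN p u t) * u t) (at t within {0..T})"
        using cpT t unfolding CP_def by (intro DERIV_mult) auto
      then show "((\<lambda>t. u t * U' t) has_vector_derivative U' t * U' t + (- fN p u t) * u t) (at t within {0..T})"
        by (simp add: has_real_derivative_iff_has_vector_derivative)
    qed
    have cst: "((\<lambda>t. 2 * E0) has_integral (2 * E0 * T)) {0..T}"
      using has_integral_const_real[of "2 * E0" 0 T] T by (simp add: mult.commute)
    define h where "h t = 2 * (u t)\<^sup>2 - (1 + 2 / p) * u t powr p" for t
    have hid: "U' t * U' t + (- fN p u t) * u t - 2 * E0 = h t" if t: "t \<in> {0..T}" for t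
    proof -
      have t0: "0 \<le> t" using t by simp
      have "(U' t)\<^sup>2 = 2 * E0 + (u t)\<^sup>2 - 2 * (u t powr p / p)"
        using Et[OF t0] by (simp add: En_def field_simps)
      moreover have "u t * fN p u t = u t powr p - (u t)\<^sup>2"
        using upos[OF t0] powr_p2[OF upos[OF t0], of p] by (simp add: fN_def power2_eq_square algebra_simps)
      ultimately show ?thesis unfolding h_def by (simp add: power2_eq_square algebra_simps)
    qed
    have hd: "((\<lambda>t. U' t * U' t + (- fN p u t) * u t - 2 * E0) has_integral (u T * U' T - u 0 * U' 0 - 2 * E0 * T)) {0..T}"
      by (rule has_integral_diff[OF ibp cst])
    have "((\<lambda>t. U' t * U' t + (- fN p u t) * u t - 2 * E0) has_integral (u T * U' T - u 0 * U' 0 - 2 * E0 * T)) {0..T}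
      = (h has_integral (u T * U' T - u 0 * U' 0 - 2 * E0 * T)) {0..T}"
      by (rule has_integral_cong) (rule hid)
    then have hint: "(h has_integral (u T * U' T - u 0 * U' 0 - 2 * E0 * T)) {0..T}" using hd by simp
    have u2: "((\<lambda>t. K * (u t)\<^sup>2) has_integral (K * integral {0..T} (\<lambda>t. (u t)\<^sup>2))) {0..T}"
      by (intro has_integral_mult_right integrable_integral integrable_continuous_interval continuous_intros uc)
    have hb: "\<bar>h t\<bar> \<le> K * (u t)\<^sup>2" if t: "t \<in> {0..T}" for t
    proof -
      have t0: "0 \<le> t" using t by simp
      show ?thesis unfolding h_def K_def by (rule h_bound[OF p upos[OF t0] ub[OF t0]])
    qed
    have hb1: "h t \<le> K * (u t)\<^sup>2" "- (K * (u t)\<^sup>2) \<le> h t" if t: "t \<in> {0..T}" for t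
      using hb[OF t] by (simp_all add: abs_le_iff)
    have le1: "u T * U' T - u 0 * U' 0 - 2 * E0 * T \<le> K * integral {0..T} (\<lambda>t. (u t)\<^sup>2)"
      by (rule has_integral_le[OF hint u2]) (rule hb1)
    have le2: "- (K * integral {0..T} (\<lambda>t. (u t)\<^sup>2)) \<le> u T * U' T - u 0 * U' 0 - 2 * E0 * T"
      by (rule has_integral_le[OF has_integral_neg[OF u2] hint]) (rule hb1)
    have IS: "K * integral {0..T} (\<lambda>t. (u t)\<^sup>2) \<le> K * S"
      unfolding S_def by (intro mult_left_mono int_le_S uc L2 K0)
    have "\<bar>u T * U' T\<bar> \<le> B * B1" "\<bar>u 0 * U' 0\<bar> \<le> B * B1" using prodb T by auto
    then have pb: "u T * U' T \<le> B * B1" "- (u T * U' T) \<le> B * B1" "u 0 * U' 0 \<le> B * B1" "- (u 0 * U' 0) \<le> B * B1"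
      by (simp_all add: abs_le_iff)
    show ?thesis unfolding abs_le_iff using le1 le2 IS pb by linarith
  qed
  show ?thesis
  proof (rule ccontr)
    assume "En p (u 0) (U' 0) \<noteq> 0"
    then have E0: "E0 \<noteq> 0" by (simp add: E0_def)
    define T where "T = (2 * (B * B1) + K * S + 1) / (2 * \<bar>E0\<bar>)"
    have S0: "0 \<le> S" unfolding S_def set_lebesgue_integral_def
      by (rule Bochner_Integration.integral_nonneg) (auto simp: indicator_def)
    have B10: "0 \<le> B1" unfolding B1_def by simp
    have "0 \<le> B * B1" "0 \<le> K * S" using B0 B10 K0 S0 by simp_all
    then have num: "0 < 2 * (B * B1) + K * S + 1" by linarith
    have T0: "0 < T" unfolding T_def using num E0 by simp
    have "\<bar>2 * E0 * T\<bar> = 2 * (B * B1) + K * S + 1"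
      unfolding T_def using E0 num by (simp add: abs_mult)
    with main[OF T0] show False by simp
  qed
qed



lemma tf_at0: "\<forall>(c,s)\<in>set rs. 0 \<le> s \<Longrightarrow> tf g0 rs 0 = g0"
  by (induction rs arbitrary: g0) (auto simp: tf_def ramp_def)

lemma sum_single:
  fixes f :: "nat \<Rightarrow> real"
  assumes "i < n" "\<And>j. j < n \<Longrightarrow> j \<noteq> i \<Longrightarrow> f j = 0"
  shows "(\<Sum>j<n. f j) = f i"
proof -
  have "(\<Sum>j<n. f j) = f i + (\<Sum>j\<in>{..<n} - {i}. f j)"
    using assms(1) by (subst sum.remove[of _ i]) auto
  also have "(\<Sum>j\<in>{..<n} - {i}. f j) = 0" using assms(2) by (intro sum.neutral) auto
  finally show ?thesis by simp
qed

lemma bs_family: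
  fixes gh gp gl :: "nat \<Rightarrow> real" and rh rp rl :: "nat \<Rightarrow> (real \<times> real) list" and Yh :: "nat \<Rightarrow> real"
  assumes bs: "bound_state p H P L l u" and H1g: "H1_graph H P L l u du"
    and ah: "\<forall>i<H. 0 \<le> Yh i \<and> (\<forall>(c,s)\<in>set (rh i). 0 \<le> s \<and> s \<le> Yh i) \<and> (\<Sum>(c,s)\<leftarrow>rh i. c) = 0 \<and> tf (gh i) (rh i) (Yh i) = 0"
    and ap: "\<forall>j<P. \<forall>(c,s)\<in>set (rp j). 0 \<le> s"
    and al: "\<forall>k<L. \<forall>(c,s)\<in>set (rl k). 0 \<le> s"
    and vert: "(\<forall>i<H. gh i = cv) \<and> (\<forall>j<P. gp j = cv) \<and> (\<forall>k<L. gl k = cv \<and> tf (gl k) (rl k) (2*l) = cv)"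
  shows "(\<Sum>i<H. LINT x:{0..}|lborel. wint p (hl u i) (hl du i) (gh i) (rh i) x) +
         (\<Sum>j<P. LINT x:{0..l}|lborel. wint p (pd u j) (pd du j) (gp j) (rp j) x) +
         (\<Sum>k<L. LINT x:{0..2*l}|lborel. wint p (lp u k) (lp du k) (gl k) (rl k) x) = 0"
proof -
  define eta :: gfun where "eta = (\<lambda>i. tf (gh i) (rh i), \<lambda>j. tf (gp j) (rp j), \<lambda>k. tf (gl k) (rl k))"
  define deta :: gfun where "deta = (\<lambda>i. dtf (rh i), \<lambda>j. dtf (rp j), \<lambda>k. dtf (rl k))"
  have Hg: "H1_graph H P L l eta deta"
    unfolding H1_graph_def
  proof (intro conjI allI impI)
    fix i assume i: "i < H"
    have "H1_on {0..} (tf (gh i) (rh i)) (dtf (rh i))"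
      using ah i by (intro test_H1_half[of _ "Yh i"]) auto
    then show "H1_on {0..} (hl eta i) (hl deta i)"
      unfolding eta_def deta_def hl_def by simp
  next
    fix j assume "j < P"
    show "H1_on {0..l} (pd eta j) (pd deta j)" unfolding eta_def deta_def pd_def by (simp add: test_H1_compact)
  next
    fix k assume "k < L"
    show "H1_on {0..2*l} (lp eta k) (lp deta k)" unfolding eta_def deta_def lp_def by (simp add: test_H1_compact)
  next
    show "\<exists>c. (\<forall>i<H. hl eta i 0 = c) \<and> (\<forall>j<P. pd eta j 0 = c) \<and> (\<forall>k<L. lp eta k 0 = c \<and> lp eta k (2 * l) = c)"
    proof (intro exI[of _ cv] conjI allI impI)
      fix i assume i: "i < H"
      have "tf (gh i) (rh i) 0 = gh i" by (rule tf_at0) (use ah i in auto)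
      then show "hl eta i 0 = cv" using vert i by (simp add: eta_def hl_def)
    next
      fix j assume j: "j < P"
      have "tf (gp j) (rp j) 0 = gp j" by (rule tf_at0) (use ap j in auto)
      then show "pd eta j 0 = cv" using vert j by (simp add: eta_def pd_def)
    next
      fix k assume k: "k < L"
      have "tf (gl k) (rl k) 0 = gl k" by (rule tf_at0) (use al k in auto)
      then show "lp eta k 0 = cv" using vert k by (simp add: eta_def lp_def)
      have "tf (gl k) (rl k) (2 * l) = cv" using vert k by blast
      then show "lp eta k (2 * l) = cv" by (simp add: eta_def lp_def)
    qed
  qed
  have "graph_int H P L l (\<lambda>a da e de. da * de + a * e - \<bar>a\<bar> powr (p - 2) * a * e) u du eta deta = 0"
    using bs H1g Hg unfolding bound_state_def by blast
  then show ?thesis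
    unfolding graph_int_def by (simp add: eta_def deta_def hl_def pd_def lp_def wint_def)
qed



lemma wint_nil[simp]: "wint p u w 0 [] x = 0"
  by (simp add: wint_def dtf_def tf_def)

lemma tf_nil[simp]: "tf 0 [] x = 0"
  by (simp add: tf_def)

lemma tent_half:
  assumes bs: "bound_state p H P L l u" and H1g: "H1_graph H P L l u du"
    and i0: "i0 < H" and xy: "0 < x" "x < y"
  shows "(LINT t:{0..}|lborel. wint p (hl u i0) (hl du i0) 0 (tent x y) t) = 0"
proof -
  let ?rh = "\<lambda>i. if i = i0 then tent x y else []"
  note P = tent_props[OF xy]
  have "(\<Sum>i<H. LINT t:{0..}|lborel. wint p (hl u i) (hl du i) ((\<lambda>_. 0) i) (?rh i) t) +
         (\<Sum>j<P. LINT t:{0..l}|lborel. wint p (pd u j) (pd du j) ((\<lambda>_. 0) j) ((\<lambda>_. []) j) t) +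
         (\<Sum>k<L. LINT t:{0..2*l}|lborel. wint p (lp u k) (lp du k) ((\<lambda>_. 0) k) ((\<lambda>_. []) k) t) = 0"
  proof (rule bs_family[OF bs H1g, where Yh="\<lambda>_. y" and cv=0])
    show "\<forall>i<H. 0 \<le> y \<and> (\<forall>(c,s)\<in>set (?rh i). 0 \<le> s \<and> s \<le> y) \<and> (\<Sum>(c,s)\<leftarrow>?rh i. c) = 0 \<and> tf 0 (?rh i) y = 0"
      using P xy by auto
  qed auto
  then have "(\<Sum>i<H. LINT t:{0..}|lborel. wint p (hl u i) (hl du i) 0 (?rh i) t) = 0" by simp
  moreover have "(\<Sum>i<H. LINT t:{0..}|lborel. wint p (hl u i) (hl du i) 0 (?rh i) t) =
      (LINT t:{0..}|lborel. wint p (hl u i0) (hl du i0) 0 (?rh i0) t)"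
    by (rule sum_single[OF i0]) simp
  ultimately show ?thesis by simp
qed

lemma tent_pend:
  assumes bs: "bound_state p H P L l u" and H1g: "H1_graph H P L l u du"
    and j0: "j0 < P" and xy: "0 < x" "x < y" "y \<le> l"
  shows "(LINT t:{0..l}|lborel. wint p (pd u j0) (pd du j0) 0 (tent x y) t) = 0"
proof -
  let ?rp = "\<lambda>j. if j = j0 then tent x y else []"
  note P = tent_props[OF xy(1,2)]
  have "(\<Sum>i<H. LINT t:{0..}|lborel. wint p (hl u i) (hl du i) ((\<lambda>_. 0) i) ((\<lambda>_. []) i) t) +
         (\<Sum>j<P. LINT t:{0..l}|lborel. wint p (pd u j) (pd du j) ((\<lambda>_. 0) j) (?rp j) t) +
         (\<Sum>k<L. LINT t:{0..2*l}|lborel. wint p (lp u k) (lp du k) ((\<lambda>_. 0) k) ((\<lambda>_. []) k) t) = 0"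
  proof (rule bs_family[OF bs H1g, where Yh="\<lambda>_. 0" and cv=0])
    show "\<forall>j<P. \<forall>(c,s)\<in>set (?rp j). 0 \<le> s" using P by auto
  qed auto
  then have "(\<Sum>j<P. LINT t:{0..l}|lborel. wint p (pd u j) (pd du j) 0 (?rp j) t) = 0" by simp
  moreover have "(\<Sum>j<P. LINT t:{0..l}|lborel. wint p (pd u j) (pd du j) 0 (?rp j) t) =
      (LINT t:{0..l}|lborel. wint p (pd u j0) (pd du j0) 0 (?rp j0) t)"
    by (rule sum_single[OF j0]) simp
  ultimately show ?thesis by simp
qed

lemma tent_loop:
  assumes bs: "bound_state p H P L l u" and H1g: "H1_graph H P L l u du"
    and k0: "k0 < L" and xy: "0 < x" "x < y" "y \<le> 2 * l"
  shows "(LINT t:{0..2*l}|lborel. wint p (lp u k0) (lp du k0) 0 (tent x y) t) = 0"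
proof -
  let ?rl = "\<lambda>k. if k = k0 then tent x y else []"
  note P = tent_props[OF xy(1,2)]
  have tT: "tf 0 (tent x y) (2 * l) = 0"
    using tf_tail[of "tent x y" y "2 * l" 0] P xy by auto
  have "(\<Sum>i<H. LINT t:{0..}|lborel. wint p (hl u i) (hl du i) ((\<lambda>_. 0) i) ((\<lambda>_. []) i) t) +
         (\<Sum>j<P. LINT t:{0..l}|lborel. wint p (pd u j) (pd du j) ((\<lambda>_. 0) j) ((\<lambda>_. []) j) t) +
         (\<Sum>k<L. LINT t:{0..2*l}|lborel. wint p (lp u k) (lp du k) ((\<lambda>_. 0) k) (?rl k) t) = 0"
  proof (rule bs_family[OF bs H1g, where Yh="\<lambda>_. 0" and cv=0])
    show "\<forall>k<L. \<forall>(c,s)\<in>set (?rl k). 0 \<le> s" using P by auto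
    show "(\<forall>i<H. 0 = 0) \<and> (\<forall>j<P. 0 = 0) \<and> (\<forall>k<L. 0 = 0 \<and> tf 0 (?rl k) (2 * l) = 0)"
      using tT by auto
  qed auto
  then have "(\<Sum>k<L. LINT t:{0..2*l}|lborel. wint p (lp u k) (lp du k) 0 (?rl k) t) = 0" by simp
  moreover have "(\<Sum>k<L. LINT t:{0..2*l}|lborel. wint p (lp u k) (lp du k) 0 (?rl k) t) =
      (LINT t:{0..2*l}|lborel. wint p (lp u k0) (lp du k0) 0 (?rl k0) t)"
    by (rule sum_single[OF k0]) simp
  ultimately show ?thesis by simp
qed



lemma abs_le_from_sq:
  fixes x y :: real
  assumes "x\<^sup>2 \<le> y\<^sup>2" "0 \<le> y"
  shows "\<bar>x\<bar> \<le> y"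
  using assms abs_le_square_iff[of x y] by simp

lemma Kp_le_Mb: "Kp p \<le> Mb p A" by (simp add: Mb_def)

lemma core_edge0:
  assumes p: "p > 2" and cp: "CP p T u U'" and T: "0 < T" and c0: "u 0 = c0"
    and x1: "x1 \<in> {0..T}" "U' x1 = 0"
  shows "- c0 \<le> U' 0" and "0 < En p c0 (U' 0) \<Longrightarrow> 0 \<le> U' 0"
proof -
  have E: "\<forall>t\<in>{0..T}. En p (u t) (U' t) = En p (u 0) (U' 0)"
    by (rule energy_const[OF cp]) (use T p in auto)
  have u0: "0 < u 0" using cp T unfolding CP_def by auto
  show pos: "0 < En p c0 (U' 0) \<Longrightarrow> 0 \<le> U' 0"
    using sign0[OF p cp T E _ x1] c0 by simp
  show "- c0 \<le> U' 0"
  proof (cases "0 < En p c0 (U' 0)")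
    case True then show ?thesis using pos u0 c0 by force
  next
    case False
    then have "(U' 0)\<^sup>2 / 2 - c0\<^sup>2 / 2 + c0 powr p / p \<le> 0" by (simp add: En_def)
    moreover have "0 \<le> c0 powr p / p" using p by simp
    ultimately have "(U' 0)\<^sup>2 \<le> c0\<^sup>2" by simp
    then have "\<bar>U' 0\<bar> \<le> c0" by (rule abs_le_from_sq) (use u0 c0 in auto)
    then show ?thesis by simp
  qed
qed

lemma core_edgeT:
  assumes p: "p > 2" and cp: "CP p T u U'" and T: "0 < T" and c0: "u 0 = c0" and cT: "u T = c0"
    and x1: "x1 \<in> {0..T}" "U' x1 = 0"
  shows "- c0 \<le> - U' T" and "0 < En p c0 (U' 0) \<Longrightarrow> U' T \<le> 0"
proof -
  have E: "\<forall>t\<in>{0..T}. En p (u t) (U' t) = En p (u 0) (U' 0)"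
    by (rule energy_const[OF cp]) (use T p in auto)
  have Tin: "T \<in> {0..T}" using T by simp
  have ET: "En p c0 (U' T) = En p c0 (U' 0)" using bspec[OF E Tin] c0 cT by simp
  have u0: "0 < u 0" using cp T unfolding CP_def by auto
  show pos: "0 < En p c0 (U' 0) \<Longrightarrow> U' T \<le> 0"
    using signT[OF p cp T E _ x1] c0 by simp
  show "- c0 \<le> - U' T"
  proof (cases "0 < En p c0 (U' 0)")
    case True then show ?thesis using pos u0 c0 by force
  next
    case False
    then have "(U' T)\<^sup>2 / 2 - c0\<^sup>2 / 2 + c0 powr p / p \<le> 0" using ET by (simp add: En_def)
    moreover have "0 \<le> c0 powr p / p" using p by simp
    ultimately have "(U' T)\<^sup>2 \<le> c0\<^sup>2" by simp
    then have "\<bar>U' T\<bar> \<le> c0" by (rule abs_le_from_sq) (use u0 c0 in auto)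
    then show ?thesis by simp
  qed
qed

lemma energy_le_A0:
  assumes p: "p > 2" and c: "0 < c0" "c0 \<le> K" and d: "0 < En p c0 d \<Longrightarrow> 0 \<le> d" "d \<le> D"
    and D: "0 \<le> D"
  shows "En p c0 d \<le> D\<^sup>2 / 2 + K powr p / p"
proof (cases "0 < En p c0 d")
  case False
  have "0 \<le> K powr p / p" using p by simp
  moreover have "0 \<le> D\<^sup>2 / 2" by simp
  ultimately show ?thesis using False by linarith
next
  case True
  then have d0: "0 \<le> d" using d by auto
  have "d\<^sup>2 \<le> D\<^sup>2" using d0 d(2) by (intro power_mono) auto
  moreover have "c0 powr p \<le> K powr p" using c p by (intro powr_mono2) auto
  then have "c0 powr p / p \<le> K powr p / p" using p by (intro divide_right_mono) auto
  moreover have "0 \<le> c0\<^sup>2 / 2" by simp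
  ultimately show ?thesis unfolding En_def by linarith
qed



lemma crit_exists:
  assumes cp: "CP p T u U'" and T: "0 < T" and eq: "u 0 = u T"
  shows "\<exists>x1\<in>{0..T}. U' x1 = 0"
proof -
  have "\<exists>z. 0 < z \<and> z < T \<and> (\<lambda>v. U' z * v) = (\<lambda>v. 0)"
  proof (rule Rolle_deriv[OF T eq CP_cont(1)[OF cp]])
    fix x assume x: "0 < x" "x < T"
    have "x \<in> interior {0..T}" using x by simp
    then have "at x within {0..T} = at x" by (rule at_within_interior)
    moreover have "(u has_real_derivative U' x) (at x within {0..T})" using cp x unfolding CP_def by auto
    ultimately have "(u has_real_derivative U' x) (at x)" by simp
    then show "(u has_derivative (\<lambda>v. U' x * v)) (at x)"
      unfolding has_field_derivative_def by simp
  qed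
  then obtain z where z: "0 < z" "z < T" "(\<lambda>v. U' z * v) = (\<lambda>v. 0)" by blast
  from fun_cong[OF z(3), of 1] have "U' z * 1 = 0" .
  then have "U' z = 0" by simp
  then show ?thesis using z(1,2) by (intro bexI[of _ z]) auto
qed



lemma main_bound:
  fixes p :: real and H P L :: nat
  assumes p: "p > 2" and H: "H \<ge> 1" and l: "0 < l" and bs: "bound_state p H P L l u"
    and pg: "positive_g H P L l u"
  shows "core_bounded_by P L l u (Mb p ((((real H + real P + 2 * real L) * Kp p)\<^sup>2 / 2 + Kp p powr p / p)))"
proof -
  define K where "K = Kp p"
  define D where "D = (real H + real P + 2 * real L) * K"
  define A0 where "A0 = D\<^sup>2 / 2 + K powr p / p"
  have K0: "0 < K" unfolding K_def by (rule Kp_pos[OF p])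
  have D0: "0 \<le> D" unfolding D_def using K0 by simp
  obtain du where H1g: "H1_graph H P L l u du" using bs unfolding bound_state_def by blast
  have H1h: "\<And>i. i < H \<Longrightarrow> H1_on {0..} (hl u i) (hl du i)"
    and H1p: "\<And>j. j < P \<Longrightarrow> H1_on {0..l} (pd u j) (pd du j)"
    and H1l: "\<And>k. k < L \<Longrightarrow> H1_on {0..2*l} (lp u k) (lp du k)"
    using H1g unfolding H1_graph_def by auto
  obtain c0 where vh: "\<And>i. i < H \<Longrightarrow> hl u i 0 = c0" and vp: "\<And>j. j < P \<Longrightarrow> pd u j 0 = c0"
    and vl: "\<And>k. k < L \<Longrightarrow> lp u k 0 = c0" and vl2: "\<And>k. k < L \<Longrightarrow> lp u k (2*l) = c0"
    using H1g unfolding H1_graph_def by blast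
  have posh: "\<And>i. i < H \<Longrightarrow> \<forall>t\<in>{0..}. 0 < hl u i t"
    and posp: "\<And>j. j < P \<Longrightarrow> \<forall>t\<in>{0..l}. 0 < pd u j t"
    and posl: "\<And>k. k < L \<Longrightarrow> \<forall>t\<in>{0..2*l}. 0 < lp u k t"
    using pg unfolding positive_g_def by auto

  have "\<forall>i. \<exists>U. i < H \<longrightarrow> ((\<forall>T>0. CP p T (hl u i) U) \<and> (\<forall>g0 rs Y. 0 \<le> Y \<longrightarrow> (\<forall>(c,s)\<in>set rs. 0 \<le> s \<and> s \<le> Y) \<longrightarrow>
            (\<Sum>(c,s)\<leftarrow>rs. c) = 0 \<longrightarrow> tf g0 rs Y = 0 \<longrightarrow>
            (LINT t:{0..}|lborel. wint p (hl u i) (hl du i) g0 rs t) = - U 0 * g0))"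
  proof
    fix i show "\<exists>U. i < H \<longrightarrow> ((\<forall>T>0. CP p T (hl u i) U) \<and> (\<forall>g0 rs Y. 0 \<le> Y \<longrightarrow> (\<forall>(c,s)\<in>set rs. 0 \<le> s \<and> s \<le> Y) \<longrightarrow>
            (\<Sum>(c,s)\<leftarrow>rs. c) = 0 \<longrightarrow> tf g0 rs Y = 0 \<longrightarrow>
            (LINT t:{0..}|lborel. wint p (hl u i) (hl du i) g0 rs t) = - U 0 * g0))"
    proof (cases "i < H")
      case True
      show ?thesis using edge_half[OF H1h[OF True] posh[OF True] tent_half[OF bs H1g True]] by blast
    qed auto
  qed
  from choice[OF this] obtain Uh where Uh: "\<And>i. i < H \<Longrightarrow> (\<forall>T>0. CP p T (hl u i) (Uh i)) \<and> (\<forall>g0 rs Y. 0 \<le> Y \<longrightarrow> (\<forall>(c,s)\<in>set rs. 0 \<le> s \<and> s \<le> Y) \<longrightarrow>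
            (\<Sum>(c,s)\<leftarrow>rs. c) = 0 \<longrightarrow> tf g0 rs Y = 0 \<longrightarrow>
            (LINT t:{0..}|lborel. wint p (hl u i) (hl du i) g0 rs t) = - Uh i 0 * g0)" by blast

  have "\<forall>j. \<exists>U. j < P \<longrightarrow> (CP p l (pd u j) U \<and> (\<forall>g0 rs. (\<forall>(c,s)\<in>set rs. 0 \<le> s \<and> s \<le> l) \<longrightarrow>
            (LINT t:{0..l}|lborel. wint p (pd u j) (pd du j) g0 rs t) = U l * tf g0 rs l - U 0 * g0))"
  proof
    fix j show "\<exists>U. j < P \<longrightarrow> (CP p l (pd u j) U \<and> (\<forall>g0 rs. (\<forall>(c,s)\<in>set rs. 0 \<le> s \<and> s \<le> l) \<longrightarrow>
            (LINT t:{0..l}|lborel. wint p (pd u j) (pd du j) g0 rs t) = U l * tf g0 rs l - U 0 * g0))"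
    proof (cases "j < P")
      case True
      show ?thesis using edge_compact[OF l H1p[OF True] posp[OF True] tent_pend[OF bs H1g True]] by blast
    qed auto
  qed
  from choice[OF this] obtain Up where Up: "\<And>j. j < P \<Longrightarrow> CP p l (pd u j) (Up j) \<and> (\<forall>g0 rs. (\<forall>(c,s)\<in>set rs. 0 \<le> s \<and> s \<le> l) \<longrightarrow>
            (LINT t:{0..l}|lborel. wint p (pd u j) (pd du j) g0 rs t) = Up j l * tf g0 rs l - Up j 0 * g0)" by blast

  have l2: "0 < 2 * l" using l by simp
  have "\<forall>k. \<exists>U. k < L \<longrightarrow> (CP p (2*l) (lp u k) U \<and> (\<forall>g0 rs. (\<forall>(c,s)\<in>set rs. 0 \<le> s \<and> s \<le> 2*l) \<longrightarrow>
            (LINT t:{0..2*l}|lborel. wint p (lp u k) (lp du k) g0 rs t) = U (2*l) * tf g0 rs (2*l) - U 0 * g0))"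
  proof
    fix k show "\<exists>U. k < L \<longrightarrow> (CP p (2*l) (lp u k) U \<and> (\<forall>g0 rs. (\<forall>(c,s)\<in>set rs. 0 \<le> s \<and> s \<le> 2*l) \<longrightarrow>
            (LINT t:{0..2*l}|lborel. wint p (lp u k) (lp du k) g0 rs t) = U (2*l) * tf g0 rs (2*l) - U 0 * g0))"
    proof (cases "k < L")
      case True
      show ?thesis using edge_compact[OF l2 H1l[OF True] posl[OF True] tent_loop[OF bs H1g True]] by blast
    qed auto
  qed
  from choice[OF this] obtain Ul where Ul: "\<And>k. k < L \<Longrightarrow> CP p (2*l) (lp u k) (Ul k) \<and> (\<forall>g0 rs. (\<forall>(c,s)\<in>set rs. 0 \<le> s \<and> s \<le> 2*l) \<longrightarrow>
            (LINT t:{0..2*l}|lborel. wint p (lp u k) (lp du k) g0 rs t) = Ul k (2*l) * tf g0 rs (2*l) - Ul k 0 * g0)" by blast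

  have FF: "(\<Sum>i<H. - Uh i 0 * gh i) + (\<Sum>j<P. Up j l * tf (gp j) (rp j) l - Up j 0 * gp j)
      + (\<Sum>k<L. Ul k (2*l) * tf (gl k) (rl k) (2*l) - Ul k 0 * gl k) = 0"
    if ah: "\<forall>i<H. 0 \<le> Yh i \<and> (\<forall>(c,s)\<in>set (rh i). 0 \<le> s \<and> s \<le> Yh i) \<and> (\<Sum>(c,s)\<leftarrow>rh i. c) = 0 \<and> tf (gh i) (rh i) (Yh i) = 0"
      and ap: "\<forall>j<P. \<forall>(c,s)\<in>set (rp j). 0 \<le> s \<and> s \<le> l"
      and al: "\<forall>k<L. \<forall>(c,s)\<in>set (rl k). 0 \<le> s \<and> s \<le> 2*l"
      and vert: "(\<forall>i<H. gh i = cv) \<and> (\<forall>j<P. gp j = cv) \<and> (\<forall>k<L. gl k = cv \<and> tf (gl k) (rl k) (2*l) = cv)"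
    for gh gp gl :: "nat \<Rightarrow> real" and rh rp rl :: "nat \<Rightarrow> (real \<times> real) list" and Yh :: "nat \<Rightarrow> real" and cv :: real
  proof -
    have S: "(\<Sum>i<H. LINT x:{0..}|lborel. wint p (hl u i) (hl du i) (gh i) (rh i) x) +
         (\<Sum>j<P. LINT x:{0..l}|lborel. wint p (pd u j) (pd du j) (gp j) (rp j) x) +
         (\<Sum>k<L. LINT x:{0..2*l}|lborel. wint p (lp u k) (lp du k) (gl k) (rl k) x) = 0"
      by (rule bs_family[OF bs H1g ah _ _ vert]) (use ap al in auto)
    have e1: "(\<Sum>i<H. LINT x:{0..}|lborel. wint p (hl u i) (hl du i) (gh i) (rh i) x) = (\<Sum>i<H. - Uh i 0 * gh i)"
    proof (rule sum.cong[OF refl])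
      fix i assume "i \<in> {..<H}"
      then have i: "i < H" by simp
      show "(LINT x:{0..}|lborel. wint p (hl u i) (hl du i) (gh i) (rh i) x) = - Uh i 0 * gh i"
        using Uh[OF i] ah i by blast
    qed
    have e2: "(\<Sum>j<P. LINT x:{0..l}|lborel. wint p (pd u j) (pd du j) (gp j) (rp j) x) = (\<Sum>j<P. Up j l * tf (gp j) (rp j) l - Up j 0 * gp j)"
    proof (rule sum.cong[OF refl])
      fix j assume "j \<in> {..<P}"
      then have j: "j < P" by simp
      show "(LINT x:{0..l}|lborel. wint p (pd u j) (pd du j) (gp j) (rp j) x) = Up j l * tf (gp j) (rp j) l - Up j 0 * gp j"
        using Up[OF j] ap j by blast
    qed
    have e3: "(\<Sum>k<L. LINT x:{0..2*l}|lborel. wint p (lp u k) (lp du k) (gl k) (rl k) x) = (\<Sum>k<L. Ul k (2*l) * tf (gl k) (rl k) (2*l) - Ul k 0 * gl k)"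
    proof (rule sum.cong[OF refl])
      fix k assume "k \<in> {..<L}"
      then have k: "k < L" by simp
      show "(LINT x:{0..2*l}|lborel. wint p (lp u k) (lp du k) (gl k) (rl k) x) = Ul k (2*l) * tf (gl k) (rl k) (2*l) - Ul k 0 * gl k"
        using Ul[OF k] al k by blast
    qed
    show ?thesis using S unfolding e1 e2 e3 .
  qed

  have KF: "(\<Sum>i<H. Uh i 0) + (\<Sum>j<P. Up j 0) + (\<Sum>k<L. Ul k 0 - Ul k (2*l)) = 0"
  proof -
    define rh0 :: "(real \<times> real) list" where "rh0 = [(-1, 0), (1, 1)]"
    define rp0 :: "(real \<times> real) list" where "rp0 = [(-1/l, 0), (1/l, l)]"
    define rl0 :: "(real \<times> real) list" where "rl0 = [(-1/l, 0), (1/l, l), (1/l, l)]"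
    have t1: "tf 1 rh0 1 = 0" by (simp add: rh0_def tf_def ramp_def)
    have t2: "tf 1 rp0 l = 0" using l by (simp add: rp0_def tf_def ramp_def)
    have t3: "tf 1 rl0 (2*l) = 1" using l by (simp add: rl0_def tf_def ramp_def field_simps)
    have "(\<Sum>i<H. - Uh i 0 * (\<lambda>_. 1) i) + (\<Sum>j<P. Up j l * tf ((\<lambda>_. 1) j) ((\<lambda>_. rp0) j) l - Up j 0 * (\<lambda>_. 1) j)
      + (\<Sum>k<L. Ul k (2*l) * tf ((\<lambda>_. 1) k) ((\<lambda>_. rl0) k) (2*l) - Ul k 0 * (\<lambda>_. 1) k) = 0"
    proof (rule FF[where Yh="\<lambda>_. 1" and rh="\<lambda>_. rh0" and cv=1])
      show "\<forall>i<H. 0 \<le> (1::real) \<and> (\<forall>(c,s)\<in>set rh0. 0 \<le> s \<and> s \<le> 1) \<and> (\<Sum>(c,s)\<leftarrow>rh0. c) = 0 \<and> tf 1 rh0 1 = 0"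
        using t1 by (simp add: rh0_def)
      show "\<forall>j<P. \<forall>(c,s)\<in>set rp0. 0 \<le> s \<and> s \<le> l" using l by (simp add: rp0_def)
      show "\<forall>k<L. \<forall>(c,s)\<in>set rl0. 0 \<le> s \<and> s \<le> 2*l" using l by (simp add: rl0_def)
      show "(\<forall>i<H. (1::real) = 1) \<and> (\<forall>j<P. (1::real) = 1) \<and> (\<forall>k<L. (1::real) = 1 \<and> tf 1 rl0 (2*l) = 1)"
        using t3 by simp
    qed
    then have "- (\<Sum>i<H. Uh i 0) - (\<Sum>j<P. Up j 0) + (\<Sum>k<L. Ul k (2*l) - Ul k 0) = 0"
      using t2 t3 by (simp add: sum_negf)
    moreover have "(\<Sum>k<L. Ul k (2*l) - Ul k 0) = - (\<Sum>k<L. Ul k 0 - Ul k (2*l))"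
      by (simp add: sum_negf[symmetric])
    ultimately show ?thesis by linarith
  qed

  have NM: "Up j0 l = 0" if j0: "j0 < P" for j0
  proof -
    define rp :: "nat \<Rightarrow> (real \<times> real) list" where "rp j = (if j = j0 then [(1, l/2)] else [])" for j
    have "(\<Sum>i<H. - Uh i 0 * (\<lambda>_. 0) i) + (\<Sum>j<P. Up j l * tf ((\<lambda>_. 0) j) (rp j) l - Up j 0 * (\<lambda>_. 0) j)
      + (\<Sum>k<L. Ul k (2*l) * tf ((\<lambda>_. 0) k) ((\<lambda>_. []) k) (2*l) - Ul k 0 * (\<lambda>_. 0) k) = 0"
    proof (rule FF[where Yh="\<lambda>_. 0" and rh="\<lambda>_. []" and cv=0])
      show "\<forall>j<P. \<forall>(c,s)\<in>set (rp j). 0 \<le> s \<and> s \<le> l" using l by (simp add: rp_def)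
    qed auto
    then have "(\<Sum>j<P. Up j l * tf 0 (rp j) l) = 0" by simp
    moreover have "(\<Sum>j<P. Up j l * tf 0 (rp j) l) = Up j0 l * tf 0 (rp j0) l"
      by (rule sum_single[OF j0]) (simp add: rp_def)
    moreover have "tf 0 (rp j0) l = l / 2" using l by (simp add: rp_def tf_def ramp_def)
    ultimately show ?thesis using l by simp
  qed

  have Ehz: "En p c0 (Uh i 0) = 0" if i: "i < H" for i
  proof -
    have "En p (hl u i 0) (Uh i 0) = 0"
    proof (rule half_zero[OF p])
      show "\<And>T. 0 < T \<Longrightarrow> CP p T (hl u i) (Uh i)" using Uh[OF i] by blast
      show "set_integrable lborel {0..} (\<lambda>x. (hl u i x)\<^sup>2)" using H1h[OF i] unfolding H1_on_def by blast
    qed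
    then show ?thesis using vh[OF i] by simp
  qed
  have H0: "0 < H" using H by simp
  have c0pos: "0 < c0" using posh[OF H0] vh[OF H0] by auto
  have cK: "c0 \<le> K"
  proof -
    have "(Uh 0 0)\<^sup>2 / 2 - c0\<^sup>2 / 2 + c0 powr p / p = 0" using Ehz[OF H0] by (simp add: En_def)
    moreover have "0 \<le> (Uh 0 0)\<^sup>2 / 2" by simp
    ultimately have "c0 powr p / p - c0\<^sup>2 / 2 \<le> 0" by linarith
    then have "c0 \<le> Mb p 0" by (rule Mb_bound[OF p c0pos])
    then show ?thesis using K0 by (simp add: Mb_def K_def)
  qed
  have Uhb: "- c0 \<le> Uh i 0" if i: "i < H" for i
  proof -
    have "(Uh i 0)\<^sup>2 / 2 - c0\<^sup>2 / 2 + c0 powr p / p = 0" using Ehz[OF i] by (simp add: En_def)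
    moreover have "0 \<le> c0 powr p / p" using p by simp
    ultimately have "(Uh i 0)\<^sup>2 \<le> c0\<^sup>2" by linarith
    then have "\<bar>Uh i 0\<bar> \<le> c0" by (rule abs_le_from_sq) (use c0pos in auto)
    then show ?thesis by simp
  qed

  have dp: "- c0 \<le> Up j 0 \<and> (0 < En p c0 (Up j 0) \<longrightarrow> 0 \<le> Up j 0)" if j: "j < P" for j
  proof -
    have cp: "CP p l (pd u j) (Up j)" using Up[OF j] by blast
    have x1: "l \<in> {0..l}" "Up j l = 0" using l NM[OF j] by auto
    show ?thesis using core_edge0[OF p cp l vp[OF j] x1] by blast
  qed
  have dl: "- c0 \<le> Ul k 0 \<and> (0 < En p c0 (Ul k 0) \<longrightarrow> 0 \<le> Ul k 0) \<and> - c0 \<le> - Ul k (2*l)" if k: "k < L" for k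
  proof -
    have cp: "CP p (2*l) (lp u k) (Ul k)" using Ul[OF k] by blast
    have eq: "lp u k 0 = lp u k (2*l)" using vl[OF k] vl2[OF k] by simp
    obtain x1 where x1: "x1 \<in> {0..2*l}" "Ul k x1 = 0" using crit_exists[OF cp l2 eq] by blast
    show ?thesis using core_edge0[OF p cp l2 vl[OF k] x1] core_edgeT[OF p cp l2 vl[OF k] vl2[OF k] x1] by blast
  qed

  define tot where "tot = (\<Sum>j<P. Up j 0 + c0) + (\<Sum>k<L. (Ul k 0 + c0) + (- Ul k (2*l) + c0))"
  have tot_eq: "tot = - (\<Sum>i<H. Uh i 0) + real P * c0 + 2 * real L * c0"
  proof -
    have s1: "(\<Sum>j<P. Up j 0 + c0) = (\<Sum>j<P. Up j 0) + real P * c0" by (simp add: sum.distrib)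
    have "(\<Sum>k<L. (Ul k 0 + c0) + (- Ul k (2*l) + c0)) = (\<Sum>k<L. (Ul k 0 - Ul k (2*l)) + 2 * c0)"
      by (rule sum.cong) auto
    also have "\<dots> = (\<Sum>k<L. Ul k 0 - Ul k (2*l)) + real L * (2 * c0)" by (simp add: sum.distrib)
    finally have s2: "(\<Sum>k<L. (Ul k 0 + c0) + (- Ul k (2*l) + c0)) = (\<Sum>k<L. Ul k 0 - Ul k (2*l)) + 2 * real L * c0"
      by simp
    have "tot = (\<Sum>j<P. Up j 0) + real P * c0 + ((\<Sum>k<L. Ul k 0 - Ul k (2*l)) + 2 * real L * c0)"
      unfolding tot_def s1 s2 by simp
    then show ?thesis using KF by linarith
  qed
  have hs: "- real H * c0 \<le> (\<Sum>i<H. Uh i 0)"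
  proof -
    have "(\<Sum>i<H. - c0) \<le> (\<Sum>i<H. Uh i 0)" by (rule sum_mono) (use Uhb in auto)
    then show ?thesis by simp
  qed
  have tot_le: "tot \<le> (real H + real P + 2 * real L) * c0"
    using tot_eq hs by (simp add: algebra_simps)
  have nnj: "0 \<le> (\<Sum>j<P. Up j 0 + c0)" by (rule sum_nonneg) (use dp in force)
  have nnk: "0 \<le> (\<Sum>k<L. (Ul k 0 + c0) + (- Ul k (2*l) + c0))" by (rule sum_nonneg) (use dl in force)
  have coefK: "(real H + real P + 2 * real L) * c0 \<le> D"
    unfolding D_def using cK by (intro mult_left_mono) auto
  have Upb: "Up j 0 \<le> D" if j: "j < P" for j
  proof -
    have "Up j 0 + c0 \<le> (\<Sum>j<P. Up j 0 + c0)" by (rule member_le_sum) (use j dp in force)+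
    then show ?thesis using nnk tot_le coefK c0pos unfolding tot_def by linarith
  qed
  have Ulb: "Ul k 0 \<le> D" if k: "k < L" for k
  proof -
    have "(Ul k 0 + c0) + (- Ul k (2*l) + c0) \<le> (\<Sum>k<L. (Ul k 0 + c0) + (- Ul k (2*l) + c0))"
      by (rule member_le_sum) (use k dl in force)+
    moreover have "0 \<le> - Ul k (2*l) + c0" using dl[OF k] by linarith
    ultimately show ?thesis using nnj tot_le coefK c0pos unfolding tot_def by linarith
  qed
  have EpA: "En p c0 (Up j 0) \<le> A0" if j: "j < P" for j
    unfolding A0_def by (rule energy_le_A0[OF p c0pos cK _ Upb[OF j] D0]) (use dp[OF j] in blast)
  have ElA: "En p c0 (Ul k 0) \<le> A0" if k: "k < L" for k
    unfolding A0_def by (rule energy_le_A0[OF p c0pos cK _ Ulb[OF k] D0]) (use dl[OF k] in blast)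
  have KM: "K \<le> Mb p A0" unfolding K_def by (rule Kp_le_Mb)

  have "core_bounded_by P L l u (Mb p A0)"
    unfolding core_bounded_by_def
  proof (intro conjI allI impI ballI)
    fix j x assume j: "j < P" and x: "x \<in> {0..l}"
    have cp: "CP p l (pd u j) (Up j)" using Up[OF j] by blast
    have E: "\<forall>t\<in>{0..l}. En p (pd u j t) (Up j t) = En p (pd u j 0) (Up j 0)"
      by (rule energy_const[OF cp]) (use l p in auto)
    have A: "En p (pd u j 0) (Up j 0) \<le> A0" using EpA[OF j] vp[OF j] by simp
    have mb: "pd u j x \<le> max (max (pd u j 0) (pd u j l)) (Mb p A0)"
      using max_bound[OF p cp l E A] x by blast
    have lin: "l \<in> {0..l}" using l by simp
    have "En p (pd u j l) 0 \<le> A0" using bspec[OF E lin] A NM[OF j] by simp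
    moreover have pl: "0 < pd u j l" using posp[OF j] lin by blast
    ultimately have "pd u j l \<le> Mb p A0" using crit_bound[OF p] by blast
    moreover have "pd u j 0 \<le> Mb p A0" using vp[OF j] cK KM by simp
    moreover have "0 < pd u j x" using posp[OF j] x by blast
    ultimately show "\<bar>pd u j x\<bar> \<le> Mb p A0" using mb by simp
  next
    fix k x assume k: "k < L" and x: "x \<in> {0..2*l}"
    have cp: "CP p (2*l) (lp u k) (Ul k)" using Ul[OF k] by blast
    have E: "\<forall>t\<in>{0..2*l}. En p (lp u k t) (Ul k t) = En p (lp u k 0) (Ul k 0)"
      by (rule energy_const[OF cp]) (use l p in auto)
    have A: "En p (lp u k 0) (Ul k 0) \<le> A0" using ElA[OF k] vl[OF k] by simp
    have mb: "lp u k x \<le> max (max (lp u k 0) (lp u k (2*l))) (Mb p A0)"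
      using max_bound[OF p cp l2 E A] x by blast
    moreover have "lp u k 0 \<le> Mb p A0" "lp u k (2*l) \<le> Mb p A0" using vl[OF k] vl2[OF k] cK KM by simp_all
    moreover have "0 < lp u k x" using posl[OF k] x by blast
    ultimately show "\<bar>lp u k x\<bar> \<le> Mb p A0" by simp
  qed
  then show ?thesis unfolding A0_def D_def K_def .
qed


theorem lemma3p6:
  fixes p :: real and H P L :: nat
  assumes "p > 2" and "H \<ge> 1"
  shows "\<exists>M>0. \<exists>lbar>0. \<forall>l. 0 < l \<and> l < lbar \<longrightarrow>
           (\<forall>u. bound_state p H P L l u \<and> positive_g H P L l u \<longrightarrow> core_bounded_by P L l u M)"
proof -
  define M where "M = Mb p ((((real H + real P + 2 * real L) * Kp p)\<^sup>2 / 2 + Kp p powr p / p))"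
  have M0: "0 < M" using Mb_pos[OF assms(1)] by (simp add: M_def)
  have "\<forall>l. 0 < l \<and> l < 1 \<longrightarrow> (\<forall>u. bound_state p H P L l u \<and> positive_g H P L l u \<longrightarrow> core_bounded_by P L l u M)"
    using main_bound[OF assms(1) assms(2)] unfolding M_def by blast
  then show ?thesis using M0 by (intro exI[of _ M] conjI exI[of _ "1::real"]) auto
qed

end
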